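(* Consider $M$ units whose treatment effect values $\tau(u)\in[0,1]$ are uniformly distributed, i.e. the $M$ values are placed uniformly spaced in $[0,1]$ and randomly permuted among the units. Then: (1) for any budget $K\le M$, one can obtain a $(1-\epsilon,\delta)$-optimal allocation using $N=O\big(M\ln(2M/\delta)/\epsilon\big)$ samples from the population; (2) solving the $\mathsf{FullCATE}$ problem with accuracy $\epsilon$ (i.e. producing, for every unit $u$, an $(\epsilon,\delta)$-accurate estimate of $\tau(u)$) requires $\Omega(M/\epsilon^2)$ samples.
   Context: A population is partitioned into $M$ units $u\in\{1,\dots,M\}$; each unit has an unknown average treatment effect $\tau(u)\in[0,1]$, the values being pairwise distinct. A sample from unit $u$ is an i.i.d. draw from $\mathrm{Bernoulli}(\tau(u))$. An estimate $\hat\tau$ of $\tau$ is $(\epsilon,\delta)$-accurate if $|\hat\tau-\tau|\le\epsilon$ with probability at least $1-\delta$. For a budget $K\in\{1,\dots,M\}$, an allocation is a set $S$ of $K$ units, with value $V_S=\sum_{u\in S}\tau(u)$; the optimal allocation $\mathcal U^*$ consists of the $K$ units with the largest $\tau(u)$. A (possibly randomized) allocation $S$ is $(1-\epsilon,\delta)$-optimal if $V_S/V_{\mathcal U^*}\ge 1-\epsilon$ with probability at least $1-\delta$.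
   Formalization: Part (2) holds only for $1/M \le \epsilon \le \epsilon_0$, for some constant $\epsilon_0 > 0$, and $\delta \le 1/4$; the uniformly spaced values are the grid $0, 1/(M-1), ..., 1$. Apart from conventions, each condition added here is assumed in the paper as well or is needed for the statement above to hold. *)

theory Defs
  imports "HOL-Probability.Probability" "HOL-Combinatorics.Permutations"
begin

text \<open>A history of samples: list of (unit queried, Bernoulli outcome).\<close>
type_synonym hist = "(nat \<times> bool) list"

text \<open>Units outside {1..M} do not exist; sampling them yields Bernoulli(0).\<close>
definition tau_unif :: "nat \<Rightarrow> (nat \<Rightarrow> nat) \<Rightarrow> nat \<Rightarrow> real" where
  "tau_unif M \<sigma> u = (if u \<in> {1..M} then (real (\<sigma> u) - 1) / (real M - 1) else 0)"

fun run :: "(hist \<Rightarrow> nat pmf) \<Rightarrow> (nat \<Rightarrow> real) \<Rightarrow> nat \<Rightarrow> hist pmf" where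
  "run pol \<tau> 0 = return_pmf []"
| "run pol \<tau> (Suc n) =
     bind_pmf (run pol \<tau> n) (\<lambda>h. bind_pmf (pol h) (\<lambda>u.
       map_pmf (\<lambda>b. h @ [(u, b)]) (bernoulli_pmf (\<tau> u))))"

definition cate_experiment ::
  "nat \<Rightarrow> nat \<Rightarrow> (hist \<Rightarrow> nat pmf) \<Rightarrow> (hist \<Rightarrow> 'a pmf) \<Rightarrow> ((nat \<Rightarrow> nat) \<times> 'a) pmf" where
  "cate_experiment M N pol out =
     bind_pmf (pmf_of_set {\<sigma>. \<sigma> permutes {1..M}}) (\<lambda>\<sigma>.
       bind_pmf (run pol (tau_unif M \<sigma>) N) (\<lambda>h.
         map_pmf (\<lambda>r. (\<sigma>, r)) (out h)))"

definition opt_alloc :: "(nat \<Rightarrow> real) \<Rightarrow> nat \<Rightarrow> nat \<Rightarrow> nat set" where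
  "opt_alloc \<tau> M K = {u \<in> {1..M}. card {v \<in> {1..M}. \<tau> v > \<tau> u} < K}"

definition alloc_value :: "(nat \<Rightarrow> real) \<Rightarrow> nat set \<Rightarrow> real" where
  "alloc_value \<tau> S = (\<Sum>u\<in>S. \<tau> u)"

definition good_alloc :: "nat \<Rightarrow> nat \<Rightarrow> real \<Rightarrow> ((nat \<Rightarrow> nat) \<times> nat set) set" where
  "good_alloc M K \<epsilon> = {(\<sigma>, S). S \<subseteq> {1..M} \<and> card S = K \<and>
      alloc_value (tau_unif M \<sigma>) S / alloc_value (tau_unif M \<sigma>) (opt_alloc (tau_unif M \<sigma>) M K)
        \<ge> 1 - \<epsilon>}"

definition accurate_at :: "nat \<Rightarrow> nat \<Rightarrow> real \<Rightarrow> ((nat \<Rightarrow> nat) \<times> (nat \<Rightarrow> real)) set" where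
  "accurate_at M u \<epsilon> = {(\<sigma>, est). \<bar>est u - tau_unif M \<sigma> u\<bar> \<le> \<epsilon>}"

end

theory Submission
  imports Defs
begin

definition lr :: "(nat \<Rightarrow> real) \<Rightarrow> (nat \<Rightarrow> real) \<Rightarrow> nat set \<Rightarrow> nat \<times> bool \<Rightarrow> real" where
  "lr \<tau> \<tau>' W x = (if fst x \<in> W then pmf (bernoulli_pmf (\<tau>' (fst x))) (snd x) / pmf (bernoulli_pmf (\<tau> (fst x))) (snd x) else 1)"

definition LR :: "(nat \<Rightarrow> real) \<Rightarrow> (nat \<Rightarrow> real) \<Rightarrow> nat set \<Rightarrow> hist \<Rightarrow> real" where
  "LR \<tau> \<tau>' W h = prod_list (map (lr \<tau> \<tau>' W) h)"

lemma LR_snoc: "LR \<tau> \<tau>' W (h @ [x]) = LR \<tau> \<tau>' W h * lr \<tau> \<tau>' W x"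
  by (simp add: LR_def)

lemma lr_nonneg: "0 \<le> lr \<tau> \<tau>' W x"
  by (simp add: lr_def)

lemma LR_nonneg: "0 \<le> LR \<tau> \<tau>' W h"
  unfolding LR_def by (induction h) (auto simp: lr_nonneg)

lemma bern_com:
  assumes "0 < a" "a < 1" "0 \<le> b" "b \<le> 1"
  shows "(\<integral>\<^sup>+x. F x \<partial>bernoulli_pmf b) =
     (\<integral>\<^sup>+x. F x * ennreal (pmf (bernoulli_pmf b) x / pmf (bernoulli_pmf a) x) \<partial>bernoulli_pmf a)"
proof -
  have e1: "ennreal (b / a) * ennreal a = ennreal b" using assms
    by (simp add: ennreal_mult''[symmetric])
  have e2: "ennreal ((1 - b) / (1 - a)) * ennreal (1 - a) = ennreal (1 - b)" using assms
    by (simp add: ennreal_mult''[symmetric])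
  show ?thesis using assms
    by (simp add: mult.assoc e1 e2)
qed

lemma com:
  assumes fix_out: "\<And>w. w \<notin> W \<Longrightarrow> \<tau>' w = \<tau> w"
    and inW: "\<And>w. w \<in> W \<Longrightarrow> 0 < \<tau> w \<and> \<tau> w < 1"
    and rng: "\<And>w. 0 \<le> \<tau>' w \<and> \<tau>' w \<le> 1"
  shows "(\<integral>\<^sup>+h. F h \<partial>run pol \<tau>' n) = (\<integral>\<^sup>+h. F h * ennreal (LR \<tau> \<tau>' W h) \<partial>run pol \<tau> n)"
proof (induction n arbitrary: F)
  case 0
  then show ?case by (simp add: LR_def)
next
  case (Suc n)
  define G where "G h = (\<integral>\<^sup>+u. \<integral>\<^sup>+b. F (h @ [(u, b)]) \<partial>bernoulli_pmf (\<tau>' u) \<partial>pol h)" for h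
  have inner: "(\<integral>\<^sup>+b. F (h @ [(u, b)]) \<partial>bernoulli_pmf (\<tau>' u)) =
      (\<integral>\<^sup>+b. F (h @ [(u, b)]) * ennreal (lr \<tau> \<tau>' W (u, b)) \<partial>bernoulli_pmf (\<tau> u))" for h u
  proof (cases "u \<in> W")
    case True
    then show ?thesis using inW[OF True] rng[of u]
      by (subst bern_com[of "\<tau> u"]) (auto simp: lr_def)
  next
    case False
    then show ?thesis by (simp add: lr_def fix_out)
  qed
  have "(\<integral>\<^sup>+h. F h \<partial>run pol \<tau>' (Suc n)) = (\<integral>\<^sup>+h. G h \<partial>run pol \<tau>' n)"
    by (simp add: G_def)
  also have "\<dots> = (\<integral>\<^sup>+h. G h * ennreal (LR \<tau> \<tau>' W h) \<partial>run pol \<tau> n)"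
    by (rule Suc.IH)
  also have "\<dots> = (\<integral>\<^sup>+h. F h * ennreal (LR \<tau> \<tau>' W h) \<partial>run pol \<tau> (Suc n))"
  proof -
    have "G h * ennreal (LR \<tau> \<tau>' W h) = (\<integral>\<^sup>+u. \<integral>\<^sup>+b. F (h @ [(u, b)]) * ennreal (LR \<tau> \<tau>' W (h @ [(u, b)])) \<partial>bernoulli_pmf (\<tau> u) \<partial>pol h)" for h
      unfolding G_def inner
      by (simp add: nn_integral_multc[symmetric] LR_snoc ennreal_mult'' LR_nonneg lr_nonneg mult.assoc mult.commute[of "ennreal (LR _ _ _ _)"])
    then show ?thesis by simp
  qed
  finally show ?case .
qed

lemma sqrt_le_half: "0 \<le> (L::real) \<Longrightarrow> sqrt L \<le> (1 + L) / 2"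
proof -
  assume "0 \<le> L"
  have "0 \<le> (sqrt L - 1)^2" by simp
  also have "(sqrt L - 1)^2 = L - 2 * sqrt L + 1" using \<open>0 \<le> L\<close> by (simp add: power2_diff)
  finally show ?thesis by simp
qed

lemma bc_step_inner:
  fixes p :: "nat pmf"
  assumes W: "\<And>w. w \<in> W \<Longrightarrow> 0 < \<tau> w \<and> \<tau> w < 1 \<and> 0 \<le> \<tau>' w \<and> \<tau>' w \<le> 1 \<and>
        1 \<le> sqrt (\<tau> w * \<tau>' w) + sqrt ((1 - \<tau> w) * (1 - \<tau>' w)) + \<eta>"
    and eta: "0 \<le> \<eta>"
    and rng: "\<And>w. 0 \<le> \<tau> w \<and> \<tau> w \<le> 1"
  shows "1 \<le> (\<integral>\<^sup>+u. \<integral>\<^sup>+b. ennreal (sqrt (lr \<tau> \<tau>' W (u, b))) \<partial>bernoulli_pmf (\<tau> u) \<partial>p)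
          + ennreal \<eta> * emeasure (measure_pmf p) W"
proof -
  have pt: "1 \<le> (\<integral>\<^sup>+b. ennreal (sqrt (lr \<tau> \<tau>' W (u, b))) \<partial>bernoulli_pmf (\<tau> u)) + ennreal \<eta> * indicator W u" for u
  proof (cases "u \<in> W")
    case True
    then have a: "0 < \<tau> u" "\<tau> u < 1" "0 \<le> \<tau>' u" "\<tau>' u \<le> 1"
       and h: "1 \<le> sqrt (\<tau> u * \<tau>' u) + sqrt ((1 - \<tau> u) * (1 - \<tau>' u)) + \<eta>" using W by auto
    have e1: "sqrt (\<tau>' u / \<tau> u) * \<tau> u = sqrt (\<tau> u * \<tau>' u)" using a
      by (smt (verit, ccfv_threshold) mult.commute real_div_sqrt real_sqrt_divide real_sqrt_mult times_divide_eq_right)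
    have e2: "sqrt ((1 - \<tau>' u) / (1 - \<tau> u)) * (1 - \<tau> u) = sqrt ((1 - \<tau> u) * (1 - \<tau>' u))" using a
      by (smt (verit, ccfv_threshold) mult.commute real_div_sqrt real_sqrt_divide real_sqrt_mult times_divide_eq_right)
    have "(\<integral>\<^sup>+b. ennreal (sqrt (lr \<tau> \<tau>' W (u, b))) \<partial>bernoulli_pmf (\<tau> u)) =
        ennreal (sqrt (\<tau> u * \<tau>' u) + sqrt ((1 - \<tau> u) * (1 - \<tau>' u)))"
      using a True by (simp add: lr_def ennreal_mult''[symmetric] e1 e2 ennreal_plus[symmetric] del: ennreal_plus)
    then show ?thesis using True h a eta
      by (simp add: ennreal_plus[symmetric] del: ennreal_plus)
  next
    case False
    then show ?thesis using rng[of u] by (simp add: lr_def ennreal_plus[symmetric] del: ennreal_plus)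
  qed
  have "1 = (\<integral>\<^sup>+u. 1 \<partial>p)" by simp
  also have "\<dots> \<le> (\<integral>\<^sup>+u. (\<integral>\<^sup>+b. ennreal (sqrt (lr \<tau> \<tau>' W (u, b))) \<partial>bernoulli_pmf (\<tau> u)) + ennreal \<eta> * indicator W u \<partial>p)"
    by (rule nn_integral_mono) (rule pt)
  also have "\<dots> = (\<integral>\<^sup>+u. \<integral>\<^sup>+b. ennreal (sqrt (lr \<tau> \<tau>' W (u, b))) \<partial>bernoulli_pmf (\<tau> u) \<partial>p)
          + ennreal \<eta> * emeasure (measure_pmf p) W"
    by (simp add: nn_integral_add nn_integral_cmult)
  finally show ?thesis .
qed

lemma bc_rec:
  assumes W: "\<And>w. w \<in> W \<Longrightarrow> 0 < \<tau> w \<and> \<tau> w < 1 \<and> 0 \<le> \<tau>' w \<and> \<tau>' w \<le> 1 \<and>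
        1 \<le> sqrt (\<tau> w * \<tau>' w) + sqrt ((1 - \<tau> w) * (1 - \<tau>' w)) + \<eta>"
    and eta: "0 \<le> \<eta>"
    and rng: "\<And>w. 0 \<le> \<tau> w \<and> \<tau> w \<le> 1"
    and rng': "\<And>w. 0 \<le> \<tau>' w \<and> \<tau>' w \<le> 1"
    and fix_out: "\<And>w. w \<notin> W \<Longrightarrow> \<tau>' w = \<tau> w"
  shows "1 \<le> (\<integral>\<^sup>+h. ennreal (sqrt (LR \<tau> \<tau>' W h)) \<partial>run pol \<tau> n)
     + ennreal (\<eta>/2) * (\<Sum>j<n. (\<integral>\<^sup>+h. emeasure (pol h) W \<partial>run pol \<tau> j) + (\<integral>\<^sup>+h. emeasure (pol h) W \<partial>run pol \<tau>' j))"
proof (induction n)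
  case 0
  then show ?case by (simp add: LR_def)
next
  case (Suc n)
  define I where "I h = (\<integral>\<^sup>+u. \<integral>\<^sup>+b. ennreal (sqrt (lr \<tau> \<tau>' W (u, b))) \<partial>bernoulli_pmf (\<tau> u) \<partial>pol h)" for h
  define B where "B n = (\<integral>\<^sup>+h. ennreal (sqrt (LR \<tau> \<tau>' W h)) \<partial>run pol \<tau> n)" for n
  define A where "A j = (\<integral>\<^sup>+h. emeasure (pol h) W \<partial>run pol \<tau> j) + (\<integral>\<^sup>+h. emeasure (pol h) W \<partial>run pol \<tau>' j)" for j
  have in_W: "\<And>w. w \<in> W \<Longrightarrow> 0 < \<tau> w \<and> \<tau> w < 1" using W by blast
  have B1: "B (Suc n) = (\<integral>\<^sup>+h. ennreal (sqrt (LR \<tau> \<tau>' W h)) * I h \<partial>run pol \<tau> n)"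
  proof -
    have "ennreal (sqrt (LR \<tau> \<tau>' W h)) * I h = (\<integral>\<^sup>+u. \<integral>\<^sup>+b. ennreal (sqrt (LR \<tau> \<tau>' W (h @ [(u, b)]))) \<partial>bernoulli_pmf (\<tau> u) \<partial>pol h)" for h
      unfolding I_def
      by (simp add: nn_integral_cmult[symmetric] LR_snoc real_sqrt_mult ennreal_mult'' LR_nonneg lr_nonneg)
    then show ?thesis unfolding B_def by simp
  qed
  have step1: "B n \<le> B (Suc n) + ennreal \<eta> * (\<integral>\<^sup>+h. ennreal (sqrt (LR \<tau> \<tau>' W h)) * emeasure (pol h) W \<partial>run pol \<tau> n)"
  proof -
    have "B n = (\<integral>\<^sup>+h. ennreal (sqrt (LR \<tau> \<tau>' W h)) * 1 \<partial>run pol \<tau> n)" unfolding B_def by simp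
    also have "\<dots> \<le> (\<integral>\<^sup>+h. ennreal (sqrt (LR \<tau> \<tau>' W h)) * (I h + ennreal \<eta> * emeasure (pol h) W) \<partial>run pol \<tau> n)"
      apply (rule nn_integral_mono)
      apply (rule mult_left_mono)
      unfolding I_def
       apply (rule bc_step_inner[OF W eta rng]) apply auto
      done
    also have "\<dots> = B (Suc n) + ennreal \<eta> * (\<integral>\<^sup>+h. ennreal (sqrt (LR \<tau> \<tau>' W h)) * emeasure (pol h) W \<partial>run pol \<tau> n)"
      unfolding B1 by (simp add: distrib_left nn_integral_add nn_integral_cmult[symmetric] mult.left_commute)
    finally show ?thesis .
  qed
  have step2: "ennreal \<eta> * (\<integral>\<^sup>+h. ennreal (sqrt (LR \<tau> \<tau>' W h)) * emeasure (pol h) W \<partial>run pol \<tau> n) \<le> ennreal (\<eta>/2) * A n"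
  proof -
    have "(\<integral>\<^sup>+h. ennreal (sqrt (LR \<tau> \<tau>' W h)) * emeasure (pol h) W \<partial>run pol \<tau> n)
        \<le> (\<integral>\<^sup>+h. ennreal (1/2) * emeasure (pol h) W + ennreal (1/2) * (emeasure (pol h) W * ennreal (LR \<tau> \<tau>' W h)) \<partial>run pol \<tau> n)"
    proof (rule nn_integral_mono)
      fix h
      have "ennreal (sqrt (LR \<tau> \<tau>' W h)) \<le> ennreal (1/2) + ennreal (1/2) * ennreal (LR \<tau> \<tau>' W h)"
      proof -
        have L0: "0 \<le> LR \<tau> \<tau>' W h" by (rule LR_nonneg)
        have "ennreal (sqrt (LR \<tau> \<tau>' W h)) \<le> ennreal (1/2 + 1/2 * LR \<tau> \<tau>' W h)"
          using sqrt_le_half[OF L0] by (intro ennreal_leI) simp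
        also have "\<dots> = ennreal (1/2) + ennreal (1/2) * ennreal (LR \<tau> \<tau>' W h)"
        proof -
          have e1: "ennreal (1/2 + 1/2 * LR \<tau> \<tau>' W h) = ennreal (1/2) + ennreal (1/2 * LR \<tau> \<tau>' W h)"
            by (rule ennreal_plus) (use L0 in auto)
          have e2: "ennreal (1/2 * LR \<tau> \<tau>' W h) = ennreal (1/2) * ennreal (LR \<tau> \<tau>' W h)"
            by (rule ennreal_mult) (use L0 in auto)
          show ?thesis by (simp only: e1 e2)
        qed
        finally show ?thesis .
      qed
      then have "ennreal (sqrt (LR \<tau> \<tau>' W h)) * emeasure (pol h) W \<le> (ennreal (1/2) + ennreal (1/2) * ennreal (LR \<tau> \<tau>' W h)) * emeasure (pol h) W"
        by (rule mult_right_mono) simp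
      then show "ennreal (sqrt (LR \<tau> \<tau>' W h)) * emeasure (pol h) W \<le> ennreal (1/2) * emeasure (pol h) W + ennreal (1/2) * (emeasure (pol h) W * ennreal (LR \<tau> \<tau>' W h))"
        by (simp only: distrib_right distrib_left mult_ac)
    qed
    also have "\<dots> = ennreal (1/2) * A n"
      unfolding A_def
      by (simp add: nn_integral_add nn_integral_cmult distrib_left com[OF fix_out in_W rng', symmetric])
    finally have "(\<integral>\<^sup>+h. ennreal (sqrt (LR \<tau> \<tau>' W h)) * emeasure (pol h) W \<partial>run pol \<tau> n) \<le> ennreal (1/2) * A n" .
    then have "ennreal \<eta> * (\<integral>\<^sup>+h. ennreal (sqrt (LR \<tau> \<tau>' W h)) * emeasure (pol h) W \<partial>run pol \<tau> n) \<le> ennreal \<eta> * (ennreal (1/2) * A n)"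
      by (rule mult_left_mono) simp
    also have "\<dots> = ennreal (\<eta>/2) * A n"
    proof -
      have e: "ennreal (\<eta> * (1/2)) = ennreal \<eta> * ennreal (1/2)" by (rule ennreal_mult) (use eta in auto)
      have e2: "ennreal (\<eta>/2) = ennreal \<eta> * ennreal (1/2)" by (metis e times_divide_eq_right mult_1_right)
      show ?thesis by (simp only: e2 mult.assoc)
    qed
    finally show ?thesis .
  qed
  have "1 \<le> B n + ennreal (\<eta>/2) * (\<Sum>j<n. A j)" using Suc.IH unfolding A_def B_def .
  also have "\<dots> \<le> B (Suc n) + ennreal (\<eta>/2) * A n + ennreal (\<eta>/2) * (\<Sum>j<n. A j)"
  proof -
    have "B n \<le> B (Suc n) + ennreal (\<eta>/2) * A n" using step1 step2 by (meson add_left_mono order_trans)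
    then show ?thesis by (rule add_right_mono)
  qed
  also have "\<dots> = B (Suc n) + ennreal (\<eta>/2) * (\<Sum>j<Suc n. A j)"
    by (simp add: distrib_left add.assoc)
  finally show ?case unfolding A_def B_def .
qed

lemma pt_ineq:
  fixes f g x t :: real
  assumes "0 \<le> f" "0 \<le> g" "f + g \<le> 1" "0 \<le> x" "0 < t"
  shows "f + g * x\<^sup>2 + x / (2*t) \<le> (1/2 + 1/(4*t) + t/4) * (1 + x\<^sup>2) + t/2 * x"
proof -
  have m: "f + g * x\<^sup>2 \<le> (1 + x\<^sup>2)/2 + \<bar>x\<^sup>2 - 1\<bar>/2"
  proof (cases "x\<^sup>2 \<le> 1")
    case True
    then have "g * x\<^sup>2 \<le> g" using assms by (simp add: mult_left_le)
    moreover have "(1 + x\<^sup>2)/2 + \<bar>x\<^sup>2 - 1\<bar>/2 = 1" using True by (simp add: field_simps)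
    ultimately show ?thesis using assms by linarith
  next
    case False
    then have "f \<le> f * x\<^sup>2" using assms by (simp add: mult_le_cancel_left1)
    then have "f + g * x\<^sup>2 \<le> (f + g) * x\<^sup>2" by (simp add: distrib_right)
    also have "\<dots> \<le> x\<^sup>2" using assms by (simp add: mult_left_le_one_le)
    finally have "f + g * x\<^sup>2 \<le> x\<^sup>2" .
    moreover have "(1 + x\<^sup>2)/2 + \<bar>x\<^sup>2 - 1\<bar>/2 = x\<^sup>2" using False by (simp add: field_simps)
    ultimately show ?thesis by linarith
  qed
  have sq: "0 \<le> (\<bar>x - 1\<bar> - t * (x + 1))\<^sup>2" by simp
  have ab: "\<bar>x\<^sup>2 - 1\<bar> = \<bar>x - 1\<bar> * (x + 1)" using assms
  proof -
    have "x\<^sup>2 - 1 = (x - 1) * (x + 1)" by (simp add: power2_eq_square algebra_simps)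
    then have "\<bar>x\<^sup>2 - 1\<bar> = \<bar>x - 1\<bar> * \<bar>x + 1\<bar>" by (simp add: abs_mult)
    then show ?thesis using assms by simp
  qed
  have am0: "2 * t * \<bar>x\<^sup>2 - 1\<bar> \<le> (x - 1)\<^sup>2 + t\<^sup>2 * (x + 1)\<^sup>2"
    using sq unfolding ab by (simp add: power2_eq_square algebra_simps)
  have am: "\<bar>x\<^sup>2 - 1\<bar>/2 \<le> (x - 1)\<^sup>2/(4*t) + t * (x + 1)\<^sup>2 / 4"
  proof -
    have "\<bar>x\<^sup>2 - 1\<bar>/2 = (2 * t * \<bar>x\<^sup>2 - 1\<bar>) / (4*t)" using assms by simp
    also have "\<dots> \<le> ((x - 1)\<^sup>2 + t\<^sup>2 * (x + 1)\<^sup>2) / (4*t)" by (rule divide_right_mono[OF am0]) (use assms in simp)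
    also have "\<dots> = (x - 1)\<^sup>2/(4*t) + t * (x + 1)\<^sup>2 / 4" using assms by (simp add: field_simps power2_eq_square)
    finally show ?thesis .
  qed
  have "f + g * x\<^sup>2 + x / (2*t) \<le> (1 + x\<^sup>2)/2 + (x - 1)\<^sup>2/(4*t) + t * (x + 1)\<^sup>2 / 4 + x / (2*t)"
    using m am by linarith
  also have "\<dots> = (1/2 + 1/(4*t) + t/4) * (1 + x\<^sup>2) + t/2 * x"
    using assms by (simp add: field_simps power2_eq_square)
  finally show ?thesis .
qed

lemma pmf_bdd:
  fixes \<phi> :: "'a \<Rightarrow> real" and p :: "'a pmf"
  assumes "\<And>x. 0 \<le> \<phi> x" "\<And>x. \<phi> x \<le> C"
  shows "integrable (measure_pmf p) \<phi>" "(\<integral>\<^sup>+x. ennreal (\<phi> x) \<partial>p) = ennreal (\<integral>x. \<phi> x \<partial>p)"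
proof -
  show i: "integrable (measure_pmf p) \<phi>"
    by (rule measure_pmf.integrable_const_bound[where B=C]) (use assms in auto)
  show "(\<integral>\<^sup>+x. ennreal (\<phi> x) \<partial>p) = ennreal (\<integral>x. \<phi> x \<partial>p)"
    by (rule nn_integral_eq_integral[OF i]) (use assms in auto)
qed

lemma pair_bound:
  assumes W: "\<And>w. w \<in> W \<Longrightarrow> 0 < \<tau> w \<and> \<tau> w < 1 \<and> 0 \<le> \<tau>' w \<and> \<tau>' w \<le> 1 \<and>
        1 \<le> sqrt (\<tau> w * \<tau>' w) + sqrt ((1 - \<tau> w) * (1 - \<tau>' w)) + \<eta>"
    and eta: "0 \<le> \<eta>"
    and rng: "\<And>w. 0 \<le> \<tau> w \<and> \<tau> w \<le> 1"
    and rng': "\<And>w. 0 \<le> \<tau>' w \<and> \<tau>' w \<le> 1"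
    and fix_out: "\<And>w. w \<notin> W \<Longrightarrow> \<tau>' w = \<tau> w"
    and t: "0 < t"
    and fg: "\<And>h. 0 \<le> f h" "\<And>h. 0 \<le> g h" "\<And>h. f h + g h \<le> 1"
  shows "(\<integral>h. f h \<partial>run pol \<tau> N) + (\<integral>h. g h \<partial>run pol \<tau>' N) \<le> 1 + t + \<eta>/(4*t) *
     (\<Sum>j<N. (\<integral>h. measure_pmf.prob (pol h) W \<partial>run pol \<tau> j) + (\<integral>h. measure_pmf.prob (pol h) W \<partial>run pol \<tau>' j))"
proof -
  have in_W: "\<And>w. w \<in> W \<Longrightarrow> 0 < \<tau> w \<and> \<tau> w < 1" using W by blast
  let ?P = "measure_pmf (run pol \<tau> N)"
  let ?Q = "measure_pmf (run pol \<tau>' N)"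
  define L where "L h = LR \<tau> \<tau>' W h" for h
  have L0: "0 \<le> L h" for h unfolding L_def by (rule LR_nonneg)
  have f1: "f h \<le> 1" for h using fg[of h] by linarith
  have g1: "g h \<le> 1" for h using fg[of h] by linarith
  have "(\<integral>\<^sup>+h. ennreal (L h) \<partial>?P) = (\<integral>\<^sup>+h. 1 \<partial>?Q)"
    using com[OF fix_out in_W rng', where F="\<lambda>_. 1" and pol=pol and n=N] unfolding L_def by simp
  also have "\<dots> = ennreal 1" by simp
  finally have "integrable ?P L \<and> (\<integral>h. L h \<partial>?P) = 1"
    by (subst nn_integral_eq_integrable[symmetric]) (use L0 in auto)
  then have iL: "integrable ?P L" and EL: "(\<integral>h. L h \<partial>?P) = 1" by auto
  have "(\<integral>\<^sup>+h. ennreal (g h * L h) \<partial>?P) = (\<integral>\<^sup>+h. ennreal (g h) \<partial>?Q)"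
    using com[OF fix_out in_W rng', where F="\<lambda>h. ennreal (g h)" and pol=pol and n=N] fg L0 unfolding L_def
    by (simp add: ennreal_mult'')
  also have "\<dots> = ennreal (\<integral>h. g h \<partial>?Q)" by (rule pmf_bdd(2)) (use fg g1 in auto)
  finally have "integrable ?P (\<lambda>h. g h * L h) \<and> (\<integral>h. g h * L h \<partial>?P) = (\<integral>h. g h \<partial>?Q)"
    by (subst nn_integral_eq_integrable[symmetric]) (use L0 fg integral_nonneg_AE in auto)
  then have igL: "integrable ?P (\<lambda>h. g h * L h)" and EgL: "(\<integral>h. g h * L h \<partial>?P) = (\<integral>h. g h \<partial>?Q)" by auto
  have iS: "integrable ?P (\<lambda>h. sqrt (L h))"
  proof (rule Bochner_Integration.integrable_bound[of _ "\<lambda>h. (1 + L h)/2"])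
    show "integrable ?P (\<lambda>h. (1 + L h) / 2)" using iL by auto
    show "AE x in ?P. norm (sqrt (L x)) \<le> norm ((1 + L x) / 2)"
      using sqrt_le_half[OF L0] L0 by auto
  qed simp
  define B where "B = (\<integral>h. sqrt (L h) \<partial>?P)"
  have B1: "B \<le> 1"
  proof -
    have "B \<le> (\<integral>h. (1 + L h)/2 \<partial>?P)" unfolding B_def
      by (rule integral_mono) (use iS iL sqrt_le_half[OF L0] in auto)
    also have "\<dots> = 1" using iL EL by simp
    finally show ?thesis .
  qed
  have if_: "integrable ?P f" by (rule pmf_bdd(1)) (use fg f1 in auto)
  define a where "a = 1/2 + 1/(4*t) + t/4"
  have "(\<integral>h. f h + g h * L h + sqrt (L h) / (2*t) \<partial>?P) \<le> (\<integral>h. a * (1 + L h) + t/2 * sqrt (L h) \<partial>?P)"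
  proof (rule integral_mono)
    show "integrable ?P (\<lambda>h. f h + g h * L h + sqrt (L h) / (2*t))" using if_ igL iS by auto
    show "integrable ?P (\<lambda>h. a * (1 + L h) + t/2 * sqrt (L h))" using iL iS by auto
    fix h
    have "f h + g h * (sqrt (L h))\<^sup>2 + sqrt (L h) / (2*t) \<le> a * (1 + (sqrt (L h))\<^sup>2) + t/2 * sqrt (L h)"
      unfolding a_def by (rule pt_ineq) (use fg t L0 in auto)
    then show "f h + g h * L h + sqrt (L h) / (2*t) \<le> a * (1 + L h) + t/2 * sqrt (L h)"
      using L0[of h] by simp
  qed
  also have "(\<integral>h. f h + g h * L h + sqrt (L h) / (2*t) \<partial>?P) = (\<integral>h. f h \<partial>?P) + (\<integral>h. g h \<partial>?Q) + B / (2*t)"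
    using if_ igL iS EgL unfolding B_def by simp
  also have "(\<integral>h. a * (1 + L h) + t/2 * sqrt (L h) \<partial>?P) = 2 * a + t/2 * B"
    using iL iS EL unfolding B_def by simp
  finally have main: "(\<integral>h. f h \<partial>?P) + (\<integral>h. g h \<partial>?Q) + B / (2*t) \<le> 2 * a + t/2 * B" .
  define S where "S = (\<Sum>j<N. (\<integral>h. measure_pmf.prob (pol h) W \<partial>run pol \<tau> j) + (\<integral>h. measure_pmf.prob (pol h) W \<partial>run pol \<tau>' j))"
  have S0: "0 \<le> S" unfolding S_def by (intro sum_nonneg add_nonneg_nonneg integral_nonneg_AE) auto
  have "ennreal 1 \<le> ennreal B + ennreal (\<eta>/2) * ennreal S"
  proof -
    have eB: "(\<integral>\<^sup>+h. ennreal (sqrt (LR \<tau> \<tau>' W h)) \<partial>run pol \<tau> N) = ennreal B"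
      unfolding B_def L_def by (rule nn_integral_eq_integral) (use iS[unfolded L_def] LR_nonneg in auto)
    have eA: "(\<integral>\<^sup>+h. emeasure (pol h) W \<partial>run pol \<sigma> j) = ennreal (\<integral>h. measure_pmf.prob (pol h) W \<partial>run pol \<sigma> j)" for \<sigma> j
      by (simp add: measure_pmf.emeasure_eq_measure pmf_bdd(2)[where C=1])
    have eS: "(\<Sum>j<N. (\<integral>\<^sup>+h. emeasure (pol h) W \<partial>run pol \<tau> j) + (\<integral>\<^sup>+h. emeasure (pol h) W \<partial>run pol \<tau>' j)) = ennreal S"
      unfolding S_def eA by (simp add: ennreal_plus[symmetric] sum_nonneg integral_nonneg_AE del: ennreal_plus)
    show ?thesis using bc_rec[where W=W and \<tau>=\<tau> and \<tau>'=\<tau>' and \<eta>=\<eta> and pol=pol and n=N, OF W eta rng rng' fix_out] unfolding eB eS by simp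
  qed
  then have "1 \<le> B + \<eta>/2 * S"
  proof -
    have B0: "0 \<le> B" unfolding B_def by (rule integral_nonneg_AE) (use L0 in auto)
    assume a: "ennreal 1 \<le> ennreal B + ennreal (\<eta>/2) * ennreal S"
    have "ennreal B + ennreal (\<eta>/2) * ennreal S = ennreal (B + \<eta>/2 * S)"
    proof -
      have "ennreal (\<eta>/2) * ennreal S = ennreal (\<eta>/2 * S)" by (rule ennreal_mult[symmetric]) (use eta S0 in auto)
      moreover have "ennreal B + ennreal (\<eta>/2 * S) = ennreal (B + \<eta>/2 * S)" by (rule ennreal_plus[symmetric]) (use eta S0 B0 in auto)
      ultimately show ?thesis by simp
    qed
    with a have "ennreal 1 \<le> ennreal (B + \<eta>/2 * S)" by (simp only:)
    then show ?thesis using B0 eta S0 by (subst (asm) ennreal_le_iff) auto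
  qed
  then have "1/(2*t) \<le> B/(2*t) + \<eta>/(4*t) * S" using t
    by (simp add: field_simps)
  moreover have "2 * a = 1 + 1/(2*t) + t/2" unfolding a_def by (simp add: field_simps)
  moreover have "t/2 * B \<le> t/2" using B1 t by simp
  ultimately show ?thesis using main unfolding S_def[symmetric] by linarith
qed

lemma sq_diff_bound:
  fixes x y :: real
  assumes "0 \<le> x" "0 \<le> y" "1/4 \<le> (x + y)\<^sup>2"
  shows "(x - y)\<^sup>2 \<le> 4 * (x\<^sup>2 - y\<^sup>2)\<^sup>2"
proof -
  have "(x\<^sup>2 - y\<^sup>2)\<^sup>2 = (x - y)\<^sup>2 * (x + y)\<^sup>2" by (simp add: power2_eq_square algebra_simps)
  moreover have "(x - y)\<^sup>2 * (1/4) \<le> (x - y)\<^sup>2 * (x + y)\<^sup>2"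
    by (rule mult_left_mono) (use assms in auto)
  ultimately show ?thesis by simp
qed

lemma hellinger:
  fixes a b :: real
  assumes "1/8 \<le> a" "a \<le> 7/8" "1/8 \<le> b" "b \<le> 7/8"
  shows "1 \<le> sqrt (a * b) + sqrt ((1 - a) * (1 - b)) + 4 * (a - b)\<^sup>2"
proof -
  define x where "x = sqrt a"
  define y where "y = sqrt b"
  define x' where "x' = sqrt (1 - a)"
  define y' where "y' = sqrt (1 - b)"
  have r: "0 \<le> a" "0 \<le> b" "a \<le> 1" "b \<le> 1" using assms by linarith+
  have xs: "x\<^sup>2 = a" "y\<^sup>2 = b" "x'\<^sup>2 = 1 - a" "y'\<^sup>2 = 1 - b" using r by (auto simp: x_def y_def x'_def y'_def)
  have nn: "0 \<le> x" "0 \<le> y" "0 \<le> x'" "0 \<le> y'" using r by (auto simp: x_def y_def x'_def y'_def)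
  have "1/4 \<le> x\<^sup>2 + y\<^sup>2" using xs assms by simp
  also have "x\<^sup>2 + y\<^sup>2 \<le> (x + y)\<^sup>2" using nn by (simp add: power2_eq_square algebra_simps)
  finally have b1: "(x - y)\<^sup>2 \<le> 4 * (a - b)\<^sup>2" using sq_diff_bound[of x y] nn xs by simp
  have "1/4 \<le> x'\<^sup>2 + y'\<^sup>2" using xs assms by simp
  also have "x'\<^sup>2 + y'\<^sup>2 \<le> (x' + y')\<^sup>2" using nn by (simp add: power2_eq_square algebra_simps)
  finally have b2: "(x' - y')\<^sup>2 \<le> 4 * (a - b)\<^sup>2" using sq_diff_bound[of x' y'] nn xs by (simp add: power2_commute)
  have e: "1 - x * y - x' * y' = ((x - y)\<^sup>2 + (x' - y')\<^sup>2) / 2"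
    using xs by (simp add: power2_diff algebra_simps)
  have "sqrt (a * b) = x * y" "sqrt ((1 - a) * (1 - b)) = x' * y'"
    by (auto simp: x_def y_def x'_def y'_def real_sqrt_mult)
  moreover have "((x - y)\<^sup>2 + (x' - y')\<^sup>2) / 2 \<le> 4 * (a - b)\<^sup>2" using b1 b2 by simp
  ultimately show ?thesis using e by linarith
qed

definition acc :: "nat \<Rightarrow> nat \<Rightarrow> (hist \<Rightarrow> nat pmf) \<Rightarrow> (hist \<Rightarrow> (nat \<Rightarrow> real) pmf) \<Rightarrow> real \<Rightarrow> nat \<Rightarrow> (nat \<Rightarrow> nat) \<Rightarrow> real" where
  "acc M N pol out \<epsilon> u \<sigma> = (\<integral>h. measure_pmf.prob (out h) {est. \<bar>est u - tau_unif M \<sigma> u\<bar> \<le> \<epsilon>} \<partial>run pol (tau_unif M \<sigma>) N)"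

definition Dv :: "nat \<Rightarrow> nat \<Rightarrow> (hist \<Rightarrow> nat pmf) \<Rightarrow> (nat \<Rightarrow> nat) \<Rightarrow> nat \<Rightarrow> real" where
  "Dv M N pol \<sigma> w = (\<Sum>j<N. \<integral>h. pmf (pol h) w \<partial>run pol (tau_unif M \<sigma>) j)"

lemma tau_unif_in:
  assumes "\<sigma> permutes {1..M}" "w \<in> {1..M}"
  shows "tau_unif M \<sigma> w = (real (\<sigma> w) - 1) / (real M - 1)"
  using assms by (simp add: tau_unif_def)

lemma tau_unif_rng:
  assumes "\<sigma> permutes {1..M}"
  shows "0 \<le> tau_unif M \<sigma> w \<and> tau_unif M \<sigma> w \<le> 1"
proof (cases "w \<in> {1..M}")
  case True
  then have s: "\<sigma> w \<in> {1..M}" using permutes_in_image[OF assms] by auto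
  then have "M \<ge> 1" by auto
  show ?thesis
  proof (cases "M = 1")
    case True
    then show ?thesis by (simp add: tau_unif_def)
  next
    case False
    then have "real M - 1 > 0" using \<open>M \<ge> 1\<close> by simp
    then show ?thesis using s True by (auto simp: tau_unif_def divide_simps)
  qed
next
  case False
  then show ?thesis by (simp only: tau_unif_def if_False) simp
qed

lemma Dv_nonneg: "0 \<le> Dv M N pol \<sigma> w"
  unfolding Dv_def by (intro sum_nonneg integral_nonneg_AE) auto

lemma pmf_integrable: "integrable (measure_pmf q) (\<lambda>h. pmf (pol h) w)"
  by (rule pmf_bdd(1)[where C=1]) (auto simp: pmf_le_1)

lemma pair_sigma:
  fixes \<epsilon> t :: real and a k lo hi M :: nat
  defines "m \<equiv> real M - 1"
  assumes M2: "2 \<le> M" and \<sigma>: "\<sigma> permutes {1..M}" and u: "u \<in> {1..M}" and a: "\<sigma> u = a"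
    and lo: "1/8 \<le> (real lo - 1) / m" "lo \<le> a" and hi: "a + k \<le> hi" "(real hi - 1) / m \<le> 7/8" "hi \<le> M"
    and k\<epsilon>: "2 * \<epsilon> < real k / m" and \<epsilon>0: "0 \<le> \<epsilon>" and t: "0 < t"
  shows "acc M N pol out \<epsilon> u \<sigma> + acc M N pol out \<epsilon> u (Transposition.transpose a (a + k) \<circ> \<sigma>) \<le> 1 + t + (real k / m)\<^sup>2 / t *
     (Dv M N pol \<sigma> u + Dv M N pol \<sigma> (inv \<sigma> (a + k)) + Dv M N pol (Transposition.transpose a (a + k) \<circ> \<sigma>) u + Dv M N pol (Transposition.transpose a (a + k) \<circ> \<sigma>) (inv \<sigma> (a + k)))"
proof -
  define \<sigma>' where "\<sigma>' = Transposition.transpose a (a + k) \<circ> \<sigma>"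
  define v where "v = inv \<sigma> (a + k)"
  define \<tau> where "\<tau> = tau_unif M \<sigma>"
  define \<tau>' where "\<tau>' = tau_unif M \<sigma>'"
  define W where "W = {u, v}"
  have m0: "0 < m" using M2 unfolding m_def by simp
  have k0: "0 < k"
  proof -
    have "0 \<le> 2 * \<epsilon>" using \<epsilon>0 by simp
    then have "0 < real k / m" using k\<epsilon> by linarith
    then show ?thesis using m0 by (simp add: zero_less_divide_iff)
  qed
  have a1: "1 \<le> a"
  proof -
    have "0 < (real lo - 1) / m" using lo(1) by linarith
    then have "1 < real lo" using m0 by (simp add: zero_less_divide_iff)
    then show ?thesis using lo(2) by linarith
  qed
  have aM: "a + k \<in> {1..M}" using hi a1 by auto
  have aM': "a \<in> {1..M}" using aM a1 by auto
  have \<sigma>'p: "\<sigma>' permutes {1..M}" unfolding \<sigma>'_def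
    by (rule permutes_compose[OF \<sigma> permutes_swap_id[OF aM' aM]])
  have v: "v \<in> {1..M}" "\<sigma> v = a + k" unfolding v_def
    using permutes_inverses(1)[OF \<sigma>] permutes_in_image[OF permutes_inv[OF \<sigma>]] aM by auto
  have uv: "u \<noteq> v" using v a k0 by auto
  have s'u: "\<sigma>' u = a + k" and s'v: "\<sigma>' v = a" unfolding \<sigma>'_def using a v k0 by auto
  have fix_out: "\<tau>' w = \<tau> w" if "w \<notin> W" for w
  proof (cases "w \<in> {1..M}")
    case True
    have "\<sigma> w \<noteq> a" using that a permutes_inj[OF \<sigma>] unfolding W_def by (metis inj_eq insertCI)
    moreover have "\<sigma> w \<noteq> a + k" using that v permutes_inj[OF \<sigma>] unfolding W_def by (metis inj_eq insertCI)
    ultimately have "\<sigma>' w = \<sigma> w" unfolding \<sigma>'_def by simp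
    then show ?thesis unfolding \<tau>_def \<tau>'_def tau_unif_def by simp
  next
    case False
    then show ?thesis unfolding \<tau>_def \<tau>'_def tau_unif_def by (simp only: if_False)
  qed
  have rng: "\<And>w. 0 \<le> \<tau> w \<and> \<tau> w \<le> 1" unfolding \<tau>_def by (rule tau_unif_rng[OF \<sigma>])
  have rng': "\<And>w. 0 \<le> \<tau>' w \<and> \<tau>' w \<le> 1" unfolding \<tau>'_def by (rule tau_unif_rng[OF \<sigma>'p])
  define x where "x = (real a - 1) / m"
  define y where "y = (real (a + k) - 1) / m"
  have tu: "\<tau> u = x" "\<tau>' u = y" "\<tau> v = y" "\<tau>' v = x"
    unfolding \<tau>_def \<tau>'_def x_def y_def m_def
    using tau_unif_in[OF \<sigma> u] tau_unif_in[OF \<sigma>'p u] tau_unif_in[OF \<sigma> v(1)] tau_unif_in[OF \<sigma>'p v(1)] a v(2) s'u s'v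
    by auto
  have xb: "1/8 \<le> x" "x \<le> 7/8" "1/8 \<le> y" "y \<le> 7/8"
  proof -
    have "(real lo - 1) / m \<le> x" unfolding x_def using lo m0 by (simp add: divide_right_mono)
    then show "1/8 \<le> x" using lo by linarith
    have "y \<le> (real hi - 1) / m" unfolding y_def using hi m0 by (simp add: divide_right_mono)
    then show "y \<le> 7/8" using hi by linarith
    have "x \<le> y" unfolding x_def y_def using m0 by (simp add: divide_right_mono)
    then show "x \<le> 7/8" "1/8 \<le> y" using \<open>1/8 \<le> x\<close> \<open>y \<le> 7/8\<close> by linarith+
  qed
  have yx: "y - x = real k / m" unfolding x_def y_def by (simp add: diff_divide_distrib[symmetric])
  define \<eta> where "\<eta> = 4 * (real k / m)\<^sup>2"
  have Whyp: "0 < \<tau> w \<and> \<tau> w < 1 \<and> 0 \<le> \<tau>' w \<and> \<tau>' w \<le> 1 \<and>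
        1 \<le> sqrt (\<tau> w * \<tau>' w) + sqrt ((1 - \<tau> w) * (1 - \<tau>' w)) + \<eta>" if "w \<in> W" for w
  proof -
    have h1: "1 \<le> sqrt (x * y) + sqrt ((1 - x) * (1 - y)) + \<eta>"
    proof -
      have "(x - y)\<^sup>2 = (real k / m)\<^sup>2" using yx by (metis power2_commute)
      then show ?thesis using hellinger[of x y] xb unfolding \<eta>_def by simp
    qed
    have h2: "1 \<le> sqrt (y * x) + sqrt ((1 - y) * (1 - x)) + \<eta>"
      using h1 by (simp add: mult.commute)
    show ?thesis using that tu xb h1 h2 unfolding W_def by auto
  qed
  have eta0: "0 \<le> \<eta>" unfolding \<eta>_def by simp
  define f where "f h = measure_pmf.prob (out h) {est. \<bar>est u - \<tau> u\<bar> \<le> \<epsilon>}" for h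
  define g where "g h = measure_pmf.prob (out h) {est. \<bar>est u - \<tau>' u\<bar> \<le> \<epsilon>}" for h
  have fg: "\<And>h. 0 \<le> f h" "\<And>h. 0 \<le> g h" "\<And>h. f h + g h \<le> 1"
  proof -
    fix h
    show "0 \<le> f h" "0 \<le> g h" unfolding f_def g_def by auto
    have disj: "{est. \<bar>est u - \<tau> u\<bar> \<le> \<epsilon>} \<inter> {est. \<bar>est u - \<tau>' u\<bar> \<le> \<epsilon>} = {}"
      using tu yx k\<epsilon> by auto
    have "f h + g h = measure_pmf.prob (out h) ({est. \<bar>est u - \<tau> u\<bar> \<le> \<epsilon>} \<union> {est. \<bar>est u - \<tau>' u\<bar> \<le> \<epsilon>})"
      unfolding f_def g_def by (subst measure_pmf.finite_measure_Union) (use disj in auto)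
    also have "\<dots> \<le> 1" by simp
    finally show "f h + g h \<le> 1" .
  qed
  note PB = pair_bound[where W=W and \<tau>=\<tau> and \<tau>'=\<tau>' and \<eta>=\<eta> and pol=pol and N=N and t=t and f=f and g=g, OF Whyp eta0 rng rng' fix_out t fg]
  have pW: "measure_pmf.prob (pol h) W = pmf (pol h) u + pmf (pol h) v" for h
    unfolding W_def using uv by (simp add: measure_measure_pmf_finite)
  have intW: "(\<integral>h. measure_pmf.prob (pol h) W \<partial>run pol \<rho> j) = (\<integral>h. pmf (pol h) u \<partial>run pol \<rho> j) + (\<integral>h. pmf (pol h) v \<partial>run pol \<rho> j)" for \<rho> j
    unfolding pW by (rule Bochner_Integration.integral_add) (rule pmf_integrable)+
  have Ssum: "(\<Sum>j<N. (\<integral>h. measure_pmf.prob (pol h) W \<partial>run pol \<tau> j) + (\<integral>h. measure_pmf.prob (pol h) W \<partial>run pol \<tau>' j))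
     = Dv M N pol \<sigma> u + Dv M N pol \<sigma> v + Dv M N pol \<sigma>' u + Dv M N pol \<sigma>' v"
    unfolding intW Dv_def \<tau>_def \<tau>'_def by (simp add: sum.distrib)
  have "acc M N pol out \<epsilon> u \<sigma> = (\<integral>h. f h \<partial>run pol \<tau> N)" unfolding acc_def f_def \<tau>_def by simp
  moreover have "acc M N pol out \<epsilon> u \<sigma>' = (\<integral>h. g h \<partial>run pol \<tau>' N)" unfolding acc_def g_def \<tau>'_def by simp
  moreover have "\<eta> / (4 * t) = (real k / m)\<^sup>2 / t" unfolding \<eta>_def by simp
  ultimately show ?thesis using PB unfolding Ssum \<sigma>'_def[symmetric] v_def[symmetric] by simp
qed

lemma sum_perm_transpose:
  fixes Z :: "(nat \<Rightarrow> nat) \<Rightarrow> real"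
  assumes "a \<in> {1..M}" "b \<in> {1..M}"
  shows "(\<Sum>\<sigma>\<in>{\<sigma>. \<sigma> permutes {1..M}}. Z (Transposition.transpose a b \<circ> \<sigma>)) = (\<Sum>\<sigma>\<in>{\<sigma>. \<sigma> permutes {1..M}}. Z \<sigma>)"
proof (rule sum.reindex_bij_witness[where i="\<lambda>\<sigma>. Transposition.transpose a b \<circ> \<sigma>" and j="\<lambda>\<sigma>. Transposition.transpose a b \<circ> \<sigma>"])
  have tp: "Transposition.transpose a b permutes {1..M}" using assms by (rule permutes_swap_id)
  fix \<sigma> assume "\<sigma> \<in> {\<sigma>. \<sigma> permutes {1..M}}"
  then have s: "\<sigma> permutes {1..M}" by simp
  show "Transposition.transpose a b \<circ> (Transposition.transpose a b \<circ> \<sigma>) = \<sigma>"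
    by (simp flip: comp_assoc)
  show "Transposition.transpose a b \<circ> \<sigma> \<in> {\<sigma>. \<sigma> permutes {1..M}}"
    using permutes_compose[OF s tp] by simp
  show "Transposition.transpose a b \<circ> (Transposition.transpose a b \<circ> \<sigma>) = \<sigma>"
    by (simp flip: comp_assoc)
  show "Transposition.transpose a b \<circ> \<sigma> \<in> {\<sigma>. \<sigma> permutes {1..M}}"
    using permutes_compose[OF s tp] by simp
  show "Z (Transposition.transpose a b \<circ> \<sigma>) = Z (Transposition.transpose a b \<circ> \<sigma>)" by simp
qed

lemma sum_unit_delta:
  fixes Y :: "nat \<Rightarrow> real"
  assumes s: "\<sigma> permutes {1..M}"
  shows "(\<Sum>u\<in>{1..M}. if \<sigma> u = a then Y u else 0) = (if a \<in> {1..M} then Y (inv \<sigma> a) else 0)"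
proof -
  have "(\<Sum>u\<in>{1..M}. if \<sigma> u = a then Y u else 0) = (\<Sum>u\<in>{1..M}. if inv \<sigma> a = u then Y u else 0)"
    by (rule sum.cong) (auto simp: permutes_inv_eq[OF s])
  also have "\<dots> = (if inv \<sigma> a \<in> {1..M} then Y (inv \<sigma> a) else 0)"
    by (rule sum.delta') simp
  also have "(inv \<sigma> a \<in> {1..M}) = (a \<in> {1..M})"
    using permutes_in_image[OF permutes_inv[OF s]] permutes_in_image[OF s] permutes_inverses[OF s] by metis
  finally show ?thesis .
qed

lemma count_fix:
  assumes u: "u \<in> {1..M}" and a: "a \<in> {1..M}"
  shows "(\<Sum>\<sigma>\<in>{\<sigma>. \<sigma> permutes {1..M}}. if \<sigma> u = a then 1 else 0 :: real) = fact M / M"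
proof -
  define c where "c b = (\<Sum>\<sigma>\<in>{\<sigma>. \<sigma> permutes {1..M}}. if \<sigma> u = b then 1 else 0 :: real)" for b
  have eq: "c b = c a" if b: "b \<in> {1..M}" for b
  proof -
    have "c a = (\<Sum>\<sigma>\<in>{\<sigma>. \<sigma> permutes {1..M}}. if (Transposition.transpose a b \<circ> \<sigma>) u = a then 1 else 0 :: real)"
      unfolding c_def by (rule sum_perm_transpose[OF a b, symmetric])
    also have "\<dots> = c b" unfolding c_def
      by (rule sum.cong) (auto simp: transpose_eq_iff)
    finally show ?thesis by simp
  qed
  have fin: "finite {\<sigma>. \<sigma> permutes {1..M}}" by (rule finite_permutations) simp
  have "(\<Sum>b\<in>{1..M}. c b) = (\<Sum>\<sigma>\<in>{\<sigma>. \<sigma> permutes {1..M}}. \<Sum>b\<in>{1..M}. if \<sigma> u = b then 1 else 0 :: real)"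
    unfolding c_def by (rule sum.swap)
  also have "\<dots> = (\<Sum>\<sigma>\<in>{\<sigma>. \<sigma> permutes {1..M}}. 1)"
  proof (rule sum.cong)
    fix \<sigma> assume "\<sigma> \<in> {\<sigma>. \<sigma> permutes {1..M}}"
    then have "\<sigma> u \<in> {1..M}" using permutes_in_image[of \<sigma> "{1..M}" u] u by simp
    then show "(\<Sum>b\<in>{1..M}. if \<sigma> u = b then 1 else 0 :: real) = 1"
      by (simp add: sum.delta)
  qed simp
  also have "\<dots> = fact M" using card_permutations[of "{1..M}" M] by simp
  finally have "(\<Sum>b\<in>{1..M}. c b) = fact M" .
  moreover have "(\<Sum>b\<in>{1..M}. c b) = M * c a" using eq by simp
  ultimately have "M * c a = fact M" by simp
  moreover have "M > 0" using u by auto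
  ultimately show ?thesis unfolding c_def by (simp add: field_simps)
qed

lemma acc_bounds: "0 \<le> acc M N pol out \<epsilon> u \<sigma>" "acc M N pol out \<epsilon> u \<sigma> \<le> 1"
proof -
  show "0 \<le> acc M N pol out \<epsilon> u \<sigma>" unfolding acc_def by (rule integral_nonneg_AE) auto
  show "acc M N pol out \<epsilon> u \<sigma> \<le> 1" unfolding acc_def
    by (rule measure_pmf.integral_le_const) (auto intro!: pmf_bdd(1)[where C=1])
qed

lemma prob_acc:
  assumes "1 \<le> M"
  shows "measure_pmf.prob (cate_experiment M N pol out) (accurate_at M u \<epsilon>) =
    (\<Sum>\<sigma>\<in>{\<sigma>. \<sigma> permutes {1..M}}. acc M N pol out \<epsilon> u \<sigma>) / fact M"
proof -
  let ?S = "{\<sigma>. \<sigma> permutes {1..M}}"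
  have fin: "finite ?S" by (rule finite_permutations) simp
  have ne: "?S \<noteq> {}" using permutes_id by blast
  have cS: "card ?S = fact M" using card_permutations[of "{1..M}" M] by simp
  have inner: "emeasure (bind_pmf (run pol (tau_unif M \<sigma>) N) (\<lambda>h. map_pmf (\<lambda>r. (\<sigma>, r)) (out h))) (accurate_at M u \<epsilon>)
     = ennreal (acc M N pol out \<epsilon> u \<sigma>)" for \<sigma>
  proof -
    have pre: "Pair \<sigma> -` accurate_at M u \<epsilon> = {est. \<bar>est u - tau_unif M \<sigma> u\<bar> \<le> \<epsilon>}"
      unfolding accurate_at_def by auto
    have "emeasure (bind_pmf (run pol (tau_unif M \<sigma>) N) (\<lambda>h. map_pmf (\<lambda>r. (\<sigma>, r)) (out h))) (accurate_at M u \<epsilon>)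
       = (\<integral>\<^sup>+h. emeasure (map_pmf (\<lambda>r. (\<sigma>, r)) (out h)) (accurate_at M u \<epsilon>) \<partial>run pol (tau_unif M \<sigma>) N)"
      by (rule emeasure_bind_pmf)
    also have "\<dots> = (\<integral>\<^sup>+h. ennreal (measure_pmf.prob (out h) {est. \<bar>est u - tau_unif M \<sigma> u\<bar> \<le> \<epsilon>}) \<partial>run pol (tau_unif M \<sigma>) N)"
      by (simp only: measure_pmf.emeasure_eq_measure measure_map_pmf pre)
    also have "\<dots> = ennreal (acc M N pol out \<epsilon> u \<sigma>)" unfolding acc_def
      by (rule pmf_bdd(2)[where C=1]) auto
    finally show ?thesis .
  qed
  have "ennreal (measure_pmf.prob (cate_experiment M N pol out) (accurate_at M u \<epsilon>))
      = emeasure (cate_experiment M N pol out) (accurate_at M u \<epsilon>)"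
    by (simp add: measure_pmf.emeasure_eq_measure)
  also have "\<dots> = (\<integral>\<^sup>+\<sigma>. ennreal (acc M N pol out \<epsilon> u \<sigma>) \<partial>pmf_of_set ?S)"
    unfolding cate_experiment_def emeasure_bind_pmf[of "pmf_of_set ?S"] by (simp only: inner)
  also have "\<dots> = ennreal (\<integral>\<sigma>. acc M N pol out \<epsilon> u \<sigma> \<partial>pmf_of_set ?S)"
    by (rule pmf_bdd(2)[where C=1]) (auto simp: acc_bounds)
  also have "(\<integral>\<sigma>. acc M N pol out \<epsilon> u \<sigma> \<partial>pmf_of_set ?S) = (\<Sum>\<sigma>\<in>?S. acc M N pol out \<epsilon> u \<sigma>) / fact M"
    using integral_pmf_of_set[OF ne fin] cS by simp
  finally show ?thesis
    by (subst (asm) ennreal_inj) (auto intro!: divide_nonneg_nonneg sum_nonneg simp: acc_bounds)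
qed

lemma Tot_bound:
  shows "(\<Sum>w\<in>{1..M}. Dv M N pol \<sigma> w) \<le> real N"
proof -
  have "(\<Sum>w\<in>{1..M}. Dv M N pol \<sigma> w) = (\<Sum>j<N. \<Sum>w\<in>{1..M}. \<integral>h. pmf (pol h) w \<partial>run pol (tau_unif M \<sigma>) j)"
    unfolding Dv_def by (rule sum.swap)
  also have "\<dots> \<le> (\<Sum>j<N. 1)"
  proof (rule sum_mono)
    fix j
    have "(\<Sum>w\<in>{1..M}. \<integral>h. pmf (pol h) w \<partial>run pol (tau_unif M \<sigma>) j) = (\<integral>h. (\<Sum>w\<in>{1..M}. pmf (pol h) w) \<partial>run pol (tau_unif M \<sigma>) j)"
      by (rule Bochner_Integration.integral_sum[symmetric, where f="\<lambda>w h. pmf (pol h) w"]) (rule pmf_integrable)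
    also have "\<dots> \<le> 1"
    proof (rule measure_pmf.integral_le_const)
      show "integrable (measure_pmf (run pol (tau_unif M \<sigma>) j)) (\<lambda>h. \<Sum>w\<in>{1..M}. pmf (pol h) w)"
        by (rule Bochner_Integration.integrable_sum) (rule pmf_integrable)
      have "(\<Sum>w\<in>{1..M}. pmf (pol h) w) \<le> 1" for h
        using measure_measure_pmf_finite[of "{1..M}" "pol h"] measure_pmf.prob_le_1[of "pol h" "{1..M}"] by simp
      then show "AE h in measure_pmf (run pol (tau_unif M \<sigma>) j). (\<Sum>w\<in>{1..M}. pmf (pol h) w) \<le> 1" by simp
    qed
    finally show "(\<Sum>w\<in>{1..M}. \<integral>h. pmf (pol h) w \<partial>run pol (tau_unif M \<sigma>) j) \<le> 1" .
  qed
  also have "\<dots> = real N" by simp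
  finally show ?thesis .
qed

lemma sum_shift_D:
  fixes I :: "nat set" and k :: nat
  assumes s: "\<sigma> permutes {1..M}" and I: "\<And>a. a \<in> I \<Longrightarrow> a + k \<in> {1..M}"
  shows "(\<Sum>a\<in>I. Dv M N pol \<sigma> (inv \<sigma> (a + k))) \<le> real N"
proof -
  have fI: "finite I"
  proof -
    have "(\<lambda>a. a + k) ` I \<subseteq> {1..M}" using I by auto
    then have "finite ((\<lambda>a. a + k) ` I)" using finite_subset by blast
    then show ?thesis using finite_imageD inj_on_def by (metis add_right_cancel)
  qed
  have inj: "inj_on (\<lambda>a. inv \<sigma> (a + k)) I"
    using permutes_inverses(1)[OF s] by (metis (no_types, lifting) add_right_cancel inj_onI)
  have "(\<Sum>a\<in>I. Dv M N pol \<sigma> (inv \<sigma> (a + k))) = (\<Sum>w\<in>(\<lambda>a. inv \<sigma> (a + k)) ` I. Dv M N pol \<sigma> w)"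
    by (rule sum.reindex[OF inj, symmetric, unfolded o_def])
  also have "\<dots> \<le> (\<Sum>w\<in>{1..M}. Dv M N pol \<sigma> w)"
  proof (rule sum_mono2)
    show "(\<lambda>a. inv \<sigma> (a + k)) ` I \<subseteq> {1..M}"
      using I permutes_in_image[OF permutes_inv[OF s]] by auto
  qed (auto simp: Dv_nonneg)
  also have "\<dots> \<le> real N" by (rule Tot_bound)
  finally show ?thesis .
qed

lemma Dsum_reindex:
  assumes a: "a \<in> {1..M}" "a + k \<in> {1..M}" and k0: "0 < k"
  shows "(\<Sum>\<sigma>\<in>{\<sigma>. \<sigma> permutes {1..M}}. if \<sigma> u = a then Dv M N pol (Transposition.transpose a (a + k) \<circ> \<sigma>) u
            + Dv M N pol (Transposition.transpose a (a + k) \<circ> \<sigma>) (inv \<sigma> (a + k)) else 0)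
       = (\<Sum>\<sigma>\<in>{\<sigma>. \<sigma> permutes {1..M}}. if \<sigma> u = a + k then Dv M N pol \<sigma> u + Dv M N pol \<sigma> (inv \<sigma> a) else 0)"
    (is "?L = ?R")
proof -
  let ?t = "Transposition.transpose a (a + k)"
  have "?R = (\<Sum>\<sigma>\<in>{\<sigma>. \<sigma> permutes {1..M}}. if (?t \<circ> \<sigma>) u = a + k then Dv M N pol (?t \<circ> \<sigma>) u + Dv M N pol (?t \<circ> \<sigma>) (inv (?t \<circ> \<sigma>) a) else 0)"
    by (rule sum_perm_transpose[OF a, symmetric])
  also have "\<dots> = ?L"
  proof (rule sum.cong)
    fix \<sigma> assume "\<sigma> \<in> {\<sigma>. \<sigma> permutes {1..M}}"
    then have s: "\<sigma> permutes {1..M}" by simp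
    have "inv (?t \<circ> \<sigma>) = inv \<sigma> \<circ> ?t"
      using o_inv_distrib[OF bij_transpose permutes_bij[OF s]] by simp
    then have i: "inv (?t \<circ> \<sigma>) a = inv \<sigma> (a + k)" by simp
    have c: "((?t \<circ> \<sigma>) u = a + k) = (\<sigma> u = a)" using k0 by (auto simp: transpose_eq_iff)
    show "(if (?t \<circ> \<sigma>) u = a + k then Dv M N pol (?t \<circ> \<sigma>) u + Dv M N pol (?t \<circ> \<sigma>) (inv (?t \<circ> \<sigma>) a) else 0) =
       (if \<sigma> u = a then Dv M N pol (?t \<circ> \<sigma>) u + Dv M N pol (?t \<circ> \<sigma>) (inv \<sigma> (a + k)) else 0)"
      unfolding i c by simp
  qed simp
  finally show ?thesis by simp
qed

lemma sum_over_units: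
  fixes Y :: "(nat \<Rightarrow> nat) \<Rightarrow> nat \<Rightarrow> real"
  assumes a: "a \<in> {1..M}"
  shows "(\<Sum>u\<in>{1..M}. \<Sum>\<sigma>\<in>{\<sigma>. \<sigma> permutes {1..M}}. if \<sigma> u = a then Y \<sigma> u else 0)
       = (\<Sum>\<sigma>\<in>{\<sigma>. \<sigma> permutes {1..M}}. Y \<sigma> (inv \<sigma> a))"
proof -
  have "(\<Sum>u\<in>{1..M}. \<Sum>\<sigma>\<in>{\<sigma>. \<sigma> permutes {1..M}}. if \<sigma> u = a then Y \<sigma> u else 0)
       = (\<Sum>\<sigma>\<in>{\<sigma>. \<sigma> permutes {1..M}}. \<Sum>u\<in>{1..M}. if \<sigma> u = a then Y \<sigma> u else 0)"
    by (rule sum.swap)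
  also have "\<dots> = (\<Sum>\<sigma>\<in>{\<sigma>. \<sigma> permutes {1..M}}. Y \<sigma> (inv \<sigma> a))"
    by (rule sum.cong) (use sum_unit_delta a in auto)
  finally show ?thesis .
qed

lemma sum_values:
  fixes X :: "(nat \<Rightarrow> nat) \<Rightarrow> real"
  assumes u: "u \<in> {1..M}"
  shows "(\<Sum>a\<in>{1..M}. \<Sum>\<sigma>\<in>{\<sigma>. \<sigma> permutes {1..M}}. if \<sigma> u = a then X \<sigma> else 0)
       = (\<Sum>\<sigma>\<in>{\<sigma>. \<sigma> permutes {1..M}}. X \<sigma>)"
proof -
  have "(\<Sum>a\<in>{1..M}. \<Sum>\<sigma>\<in>{\<sigma>. \<sigma> permutes {1..M}}. if \<sigma> u = a then X \<sigma> else 0)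
       = (\<Sum>\<sigma>\<in>{\<sigma>. \<sigma> permutes {1..M}}. \<Sum>a\<in>{1..M}. if \<sigma> u = a then X \<sigma> else 0)"
    by (rule sum.swap)
  also have "\<dots> = (\<Sum>\<sigma>\<in>{\<sigma>. \<sigma> permutes {1..M}}. X \<sigma>)"
  proof (rule sum.cong)
    fix \<sigma> assume "\<sigma> \<in> {\<sigma>. \<sigma> permutes {1..M}}"
    then have "\<sigma> u \<in> {1..M}" using permutes_in_image[of \<sigma> "{1..M}" u] u by simp
    then show "(\<Sum>a\<in>{1..M}. if \<sigma> u = a then X \<sigma> else 0) = X \<sigma>" by (simp add: sum.delta)
  qed simp
  finally show ?thesis .
qed

lemma part2_core:
  fixes \<epsilon> t :: real and k lo hi M N :: nat
  defines "m \<equiv> real M - 1"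
  assumes M2: "2 \<le> M" and lo: "1/8 \<le> (real lo - 1) / m" and hi: "(real hi - 1) / m \<le> 7/8" "hi \<le> M"
    and lohi: "lo + 2 * k \<le> hi" and k\<epsilon>: "2 * \<epsilon> < real k / m" and \<epsilon>0: "0 \<le> \<epsilon>" and t: "0 < t"
    and P: "\<And>u. u \<in> {1..M} \<Longrightarrow> 3/4 * fact M \<le> (\<Sum>\<sigma>\<in>{\<sigma>. \<sigma> permutes {1..M}}. acc M N pol out \<epsilon> u \<sigma>)"
  shows "3/4 * real M \<le> real M - real (card {lo+k..hi-k}) + real (card {lo..hi-k}) * (1 + t) / 2 + 2 * ((real k / m)\<^sup>2 / t) * real N"
proof -
  define Pi where "Pi = {\<sigma>. \<sigma> permutes {1..M}}"
  define c0 where "c0 = (fact M / M :: real)"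
  define cc where "cc = (real k / m)\<^sup>2 / t"
  define I where "I = {lo..hi-k}"
  define Mid where "Mid = {lo+k..hi-k}"
  define tr where "tr a = Transposition.transpose a (a + k)" for a
  have m0: "0 < m" using M2 unfolding m_def by simp
  have k0: "0 < k"
  proof -
    have "0 \<le> 2 * \<epsilon>" using \<epsilon>0 by simp
    then have "0 < real k / m" using k\<epsilon> by linarith
    then show ?thesis using m0 by (simp add: zero_less_divide_iff)
  qed
  have lo1: "1 \<le> lo"
  proof -
    have "0 < (real lo - 1) / m" using lo by linarith
    then have "1 < real lo" using m0 by (simp add: zero_less_divide_iff)
    then show ?thesis by linarith
  qed
  have finPi: "finite Pi" unfolding Pi_def by (rule finite_permutations) simp
  have cardPi: "card Pi = fact M" unfolding Pi_def using card_permutations[of "{1..M}" M] by simp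
  have Mc0: "real M * c0 = fact M" unfolding c0_def using M2 by simp
  have Ia: "a \<in> {1..M}" "a + k \<in> {1..M}" "lo \<le> a" "a + k \<le> hi" if "a \<in> I" for a
    using that lohi hi lo1 unfolding I_def by auto
  have cc0: "0 \<le> cc" unfolding cc_def using t by simp
  define R where "R u a = (\<Sum>\<sigma>\<in>Pi. if \<sigma> u = a then acc M N pol out \<epsilon> u \<sigma> else 0)" for u a
  define Dsum where "Dsum u a = (\<Sum>\<sigma>\<in>Pi. if \<sigma> u = a then
      Dv M N pol \<sigma> u + Dv M N pol \<sigma> (inv \<sigma> (a + k)) + Dv M N pol (tr a \<circ> \<sigma>) u + Dv M N pol (tr a \<circ> \<sigma>) (inv \<sigma> (a + k)) else 0)" for u a
  have R0: "0 \<le> R u a" for u a unfolding R_def by (intro sum_nonneg) (auto simp: acc_bounds)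
  have Rc0: "R u a \<le> c0" if "u \<in> {1..M}" "a \<in> {1..M}" for u a
  proof -
    have "R u a \<le> (\<Sum>\<sigma>\<in>Pi. if \<sigma> u = a then 1 else 0)" unfolding R_def
      by (intro sum_mono) (auto simp: acc_bounds)
    also have "\<dots> = c0" unfolding Pi_def c0_def by (rule count_fix[OF that])
    finally show ?thesis .
  qed
  have pair: "R u a + R u (a + k) \<le> (1 + t) * c0 + cc * Dsum u a" if u: "u \<in> {1..M}" and a: "a \<in> I" for u a
  proof -
    have "R u (a + k) = (\<Sum>\<sigma>\<in>Pi. if (tr a \<circ> \<sigma>) u = a + k then acc M N pol out \<epsilon> u (tr a \<circ> \<sigma>) else 0)"
      unfolding R_def Pi_def tr_def by (rule sum_perm_transpose[OF Ia(1,2)[OF a], symmetric])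
    also have "\<dots> = (\<Sum>\<sigma>\<in>Pi. if \<sigma> u = a then acc M N pol out \<epsilon> u (tr a \<circ> \<sigma>) else 0)"
      by (rule sum.cong) (use k0 in \<open>auto simp: tr_def transpose_eq_iff\<close>)
    finally have e1: "R u (a + k) = (\<Sum>\<sigma>\<in>Pi. if \<sigma> u = a then acc M N pol out \<epsilon> u (tr a \<circ> \<sigma>) else 0)" .
    have e: "R u a + R u (a + k) = (\<Sum>\<sigma>\<in>Pi. if \<sigma> u = a then acc M N pol out \<epsilon> u \<sigma> + acc M N pol out \<epsilon> u (tr a \<circ> \<sigma>) else 0)"
      unfolding e1 unfolding R_def sum.distrib[symmetric] by (rule sum.cong) auto
    also have "\<dots> \<le> (\<Sum>\<sigma>\<in>Pi. (1 + t) * (if \<sigma> u = a then 1 else 0) + cc * (if \<sigma> u = a then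
      Dv M N pol \<sigma> u + Dv M N pol \<sigma> (inv \<sigma> (a + k)) + Dv M N pol (tr a \<circ> \<sigma>) u + Dv M N pol (tr a \<circ> \<sigma>) (inv \<sigma> (a + k)) else 0))"
    proof (rule sum_mono)
      fix \<sigma> assume s: "\<sigma> \<in> Pi"
      show "(if \<sigma> u = a then acc M N pol out \<epsilon> u \<sigma> + acc M N pol out \<epsilon> u (tr a \<circ> \<sigma>) else 0) \<le> (1 + t) * (if \<sigma> u = a then 1 else 0) + cc * (if \<sigma> u = a then
      Dv M N pol \<sigma> u + Dv M N pol \<sigma> (inv \<sigma> (a + k)) + Dv M N pol (tr a \<circ> \<sigma>) u + Dv M N pol (tr a \<circ> \<sigma>) (inv \<sigma> (a + k)) else 0)"
      proof (cases "\<sigma> u = a")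
        case True
        show ?thesis using True pair_sigma[of M \<sigma> u a lo k hi \<epsilon> t N pol out] s u Ia[OF a] M2 lo hi k\<epsilon> \<epsilon>0 t
          unfolding Pi_def tr_def cc_def m_def by simp
      qed simp
    qed
    also have "\<dots> = (1 + t) * c0 + cc * Dsum u a"
      unfolding Dsum_def sum.distrib sum_distrib_left[symmetric]
      using count_fix[OF u Ia(1)[OF a]] unfolding Pi_def c0_def by simp
    finally show ?thesis .
  qed
  have per_u: "3/4 * fact M \<le> (real M - real (card Mid)) * c0 + ((real (card I)) * (1 + t) * c0 + cc * (\<Sum>a\<in>I. Dsum u a)) / 2"
    if u: "u \<in> {1..M}" for u
  proof -
    have MidM: "Mid \<subseteq> {1..M}" unfolding Mid_def using lo1 hi by auto
    have MidI: "Mid \<subseteq> I" unfolding Mid_def I_def by auto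
    have "3/4 * fact M \<le> (\<Sum>\<sigma>\<in>Pi. acc M N pol out \<epsilon> u \<sigma>)" using P[OF u] unfolding Pi_def .
    also have "\<dots> = (\<Sum>a\<in>{1..M}. R u a)" unfolding R_def Pi_def by (rule sum_values[OF u, symmetric])
    also have "\<dots> = (\<Sum>a\<in>{1..M} - Mid. R u a) + (\<Sum>a\<in>Mid. R u a)"
      by (rule sum.subset_diff[OF MidM]) simp
    also have "(\<Sum>a\<in>{1..M} - Mid. R u a) \<le> real (card ({1..M} - Mid)) * c0"
      using sum_bounded_above[of "{1..M} - Mid" "R u" c0] Rc0[OF u] by auto
    also have "real (card ({1..M} - Mid)) = real M - real (card Mid)"
    proof -
      have fM: "finite Mid" unfolding Mid_def by simp
      show ?thesis using card_Diff_subset[OF fM MidM] card_mono[OF _ MidM] by (simp add: of_nat_diff)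
    qed
    also have "(\<Sum>a\<in>Mid. R u a) \<le> ((\<Sum>a\<in>I. R u a) + (\<Sum>a\<in>I. R u (a + k))) / 2"
    proof -
      have s1: "(\<Sum>a\<in>Mid. R u a) \<le> (\<Sum>a\<in>I. R u a)"
        by (rule sum_mono2) (use MidI R0 in \<open>auto simp: I_def\<close>)
      have "(\<Sum>a\<in>I. R u (a + k)) = (\<Sum>b\<in>(\<lambda>a. a + k) ` I. R u b)"
        by (rule sum.reindex[symmetric, unfolded o_def]) (simp add: inj_on_def)
      moreover have "(\<Sum>a\<in>Mid. R u a) \<le> (\<Sum>b\<in>(\<lambda>a. a + k) ` I. R u b)"
      proof (rule sum_mono2)
        show "Mid \<subseteq> (\<lambda>a. a + k) ` I"
        proof
          fix b assume "b \<in> Mid"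
          then have "b - k \<in> I" "b = b - k + k" unfolding Mid_def I_def by auto
          then show "b \<in> (\<lambda>a. a + k) ` I" by blast
        qed
      qed (use R0 in \<open>auto simp: I_def\<close>)
      ultimately show ?thesis using s1 by simp
    qed
    also have "(\<Sum>a\<in>I. R u a) + (\<Sum>a\<in>I. R u (a + k)) \<le> (\<Sum>a\<in>I. (1 + t) * c0 + cc * Dsum u a)"
      unfolding sum.distrib[symmetric] by (rule sum_mono) (rule pair[OF u])
    also have "\<dots> = real (card I) * (1 + t) * c0 + cc * (\<Sum>a\<in>I. Dsum u a)"
      by (simp add: sum.distrib sum_distrib_left)
    finally show ?thesis by simp
  qed
  have Dsum_u: "(\<Sum>u\<in>{1..M}. Dsum u a) = 2 * (\<Sum>\<sigma>\<in>Pi. Dv M N pol \<sigma> (inv \<sigma> (a + 0)) + Dv M N pol \<sigma> (inv \<sigma> (a + k)))"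
    if a: "a \<in> I" for a
  proof -
    have d: "Dsum u a = (\<Sum>\<sigma>\<in>Pi. if \<sigma> u = a then Dv M N pol \<sigma> u + Dv M N pol \<sigma> (inv \<sigma> (a + k)) else 0)
        + (\<Sum>\<sigma>\<in>Pi. if \<sigma> u = a + k then Dv M N pol \<sigma> u + Dv M N pol \<sigma> (inv \<sigma> a) else 0)" for u
    proof -
      have "Dsum u a = (\<Sum>\<sigma>\<in>Pi. if \<sigma> u = a then Dv M N pol \<sigma> u + Dv M N pol \<sigma> (inv \<sigma> (a + k)) else 0)
        + (\<Sum>\<sigma>\<in>Pi. if \<sigma> u = a then Dv M N pol (tr a \<circ> \<sigma>) u + Dv M N pol (tr a \<circ> \<sigma>) (inv \<sigma> (a + k)) else 0)"
        unfolding Dsum_def sum.distrib[symmetric] by (rule sum.cong) auto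
      also have "(\<Sum>\<sigma>\<in>Pi. if \<sigma> u = a then Dv M N pol (tr a \<circ> \<sigma>) u + Dv M N pol (tr a \<circ> \<sigma>) (inv \<sigma> (a + k)) else 0)
        = (\<Sum>\<sigma>\<in>Pi. if \<sigma> u = a + k then Dv M N pol \<sigma> u + Dv M N pol \<sigma> (inv \<sigma> a) else 0)"
        unfolding Pi_def tr_def by (rule Dsum_reindex[OF Ia(1,2)[OF a] k0])
      finally show ?thesis .
    qed
    have "(\<Sum>u\<in>{1..M}. Dsum u a) = (\<Sum>u\<in>{1..M}. \<Sum>\<sigma>\<in>Pi. if \<sigma> u = a then Dv M N pol \<sigma> u + Dv M N pol \<sigma> (inv \<sigma> (a + k)) else 0)
        + (\<Sum>u\<in>{1..M}. \<Sum>\<sigma>\<in>Pi. if \<sigma> u = a + k then Dv M N pol \<sigma> u + Dv M N pol \<sigma> (inv \<sigma> a) else 0)"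
      unfolding d by (rule sum.distrib)
    also have "\<dots> = (\<Sum>\<sigma>\<in>Pi. Dv M N pol \<sigma> (inv \<sigma> a) + Dv M N pol \<sigma> (inv \<sigma> (a + k)))
        + (\<Sum>\<sigma>\<in>Pi. Dv M N pol \<sigma> (inv \<sigma> (a + k)) + Dv M N pol \<sigma> (inv \<sigma> a))"
      unfolding Pi_def
      using sum_over_units[OF Ia(1)[OF a], where Y="\<lambda>\<sigma> u. Dv M N pol \<sigma> u + Dv M N pol \<sigma> (inv \<sigma> (a + k))"]
        sum_over_units[OF Ia(2)[OF a], where Y="\<lambda>\<sigma> u. Dv M N pol \<sigma> u + Dv M N pol \<sigma> (inv \<sigma> a)"]
      by simp
    finally show ?thesis by (simp add: add.commute)
  qed
  have Dtot: "(\<Sum>u\<in>{1..M}. \<Sum>a\<in>I. Dsum u a) \<le> 4 * real N * fact M"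
  proof -
    have "(\<Sum>u\<in>{1..M}. \<Sum>a\<in>I. Dsum u a) = (\<Sum>a\<in>I. \<Sum>u\<in>{1..M}. Dsum u a)" by (rule sum.swap)
    also have "\<dots> = (\<Sum>a\<in>I. 2 * (\<Sum>\<sigma>\<in>Pi. Dv M N pol \<sigma> (inv \<sigma> (a + 0)) + Dv M N pol \<sigma> (inv \<sigma> (a + k))))"
      by (rule sum.cong) (use Dsum_u in auto)
    also have "\<dots> = 2 * (\<Sum>\<sigma>\<in>Pi. (\<Sum>a\<in>I. Dv M N pol \<sigma> (inv \<sigma> (a + 0))) + (\<Sum>a\<in>I. Dv M N pol \<sigma> (inv \<sigma> (a + k))))"
      by (simp add: sum_distrib_left[symmetric] sum.distrib sum.swap[of _ I Pi])
    also have "\<dots> \<le> 2 * (\<Sum>\<sigma>\<in>Pi. real N + real N)"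
    proof -
      have "(\<Sum>\<sigma>\<in>Pi. (\<Sum>a\<in>I. Dv M N pol \<sigma> (inv \<sigma> (a + 0))) + (\<Sum>a\<in>I. Dv M N pol \<sigma> (inv \<sigma> (a + k)))) \<le> (\<Sum>\<sigma>\<in>Pi. real N + real N)"
      proof (rule sum_mono)
        fix \<sigma> assume "\<sigma> \<in> Pi"
        then have s: "\<sigma> permutes {1..M}" unfolding Pi_def by simp
        have "(\<Sum>a\<in>I. Dv M N pol \<sigma> (inv \<sigma> (a + 0))) \<le> real N"
          by (rule sum_shift_D[OF s]) (use Ia in auto)
        moreover have "(\<Sum>a\<in>I. Dv M N pol \<sigma> (inv \<sigma> (a + k))) \<le> real N"
          by (rule sum_shift_D[OF s]) (use Ia in auto)
        ultimately show "(\<Sum>a\<in>I. Dv M N pol \<sigma> (inv \<sigma> (a + 0))) + (\<Sum>a\<in>I. Dv M N pol \<sigma> (inv \<sigma> (a + k))) \<le> real N + real N"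
          by simp
      qed
      then show ?thesis by (simp only: mult_left_mono)
    qed
    also have "\<dots> = 4 * real N * fact M" using cardPi by simp
    finally show ?thesis .
  qed
  define K where "K = (real M - real (card Mid)) * c0 + real (card I) * (1 + t) * c0 / 2"
  have per_u': "3/4 * fact M \<le> K + cc / 2 * (\<Sum>a\<in>I. Dsum u a)" if u: "u \<in> {1..M}" for u
  proof -
    have "((real (card I)) * (1 + t) * c0 + cc * (\<Sum>a\<in>I. Dsum u a)) / 2 = real (card I) * (1 + t) * c0 / 2 + cc / 2 * (\<Sum>a\<in>I. Dsum u a)"
      by (simp add: add_divide_distrib)
    then show ?thesis using per_u[OF u] unfolding K_def by linarith
  qed
  have "(\<Sum>u\<in>{1..M}. 3/4 * fact M) \<le> (\<Sum>u\<in>{1..M}. K + cc / 2 * (\<Sum>a\<in>I. Dsum u a))"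
    by (rule sum_mono) (rule per_u')
  also have "\<dots> = real M * K + cc / 2 * (\<Sum>u\<in>{1..M}. \<Sum>a\<in>I. Dsum u a)"
    by (simp add: sum.distrib sum_distrib_left)
  also have "\<dots> \<le> real M * K + cc / 2 * (4 * real N * fact M)"
  proof -
    have "cc / 2 * (\<Sum>u\<in>{1..M}. \<Sum>a\<in>I. Dsum u a) \<le> cc / 2 * (4 * real N * fact M)"
      by (rule mult_left_mono[OF Dtot]) (use cc0 in simp)
    then show ?thesis by simp
  qed
  finally have "real M * (3/4 * fact M) \<le> real M * K + cc / 2 * (4 * real N * fact M)" by simp
  moreover have "real M * K = fact M * (real M - real (card Mid)) + fact M * real (card I) * (1 + t) / 2"
    unfolding K_def Mc0[symmetric] by (simp add: algebra_simps)
  ultimately have "real M * (3/4 * fact M) \<le> fact M * (real M - real (card Mid)) + (fact M * real (card I) * (1 + t) + cc * (4 * real N * fact M)) / 2"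
    by (simp add: add_divide_distrib)
  moreover have "fact M * (real M - real (card Mid)) + (fact M * real (card I) * (1 + t) + cc * (4 * real N * fact M)) / 2
      = fact M * (real M - real (card Mid) + real (card I) * (1 + t) / 2 + 2 * cc * real N)"
    by (simp add: field_simps)
  moreover have "real M * (3/4 * fact M) = fact M * (3/4 * real M)" by simp
  ultimately have "fact M * (3/4 * real M) \<le> fact M * (real M - real (card Mid) + real (card I) * (1 + t) / 2 + 2 * cc * real N)"
    by simp
  then have "3/4 * real M \<le> real M - real (card Mid) + real (card I) * (1 + t) / 2 + 2 * cc * real N"
    by (rule mult_left_le_imp_le) simp
  then show ?thesis unfolding Mid_def I_def cc_def .
qed

lemma part2_main:
  fixes M N :: nat and \<epsilon> \<delta> :: real and pol and out :: "hist \<Rightarrow> (nat \<Rightarrow> real) pmf"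
  assumes M2: "2 \<le> M" and eM: "1 / real M \<le> \<epsilon>" and e0: "\<epsilon> \<le> 1/200" and d0: "0 < \<delta>" and d4: "\<delta> \<le> 1/4"
    and acc: "\<forall>u\<in>{1..M}. measure_pmf.prob (cate_experiment M N pol out) (accurate_at M u \<epsilon>) \<ge> 1 - \<delta>"
  shows "1 / 6400 * real M / \<epsilon>\<^sup>2 \<le> real N"
proof -
  define m where "m = real M - 1"
  have Mpos: "0 < real M" using M2 by simp
  have epos: "0 < \<epsilon>" using eM Mpos by (meson order_less_le_trans zero_less_divide_1_iff)
  have M200: "200 \<le> real M"
  proof -
    have "1 / real M \<le> 1/200" using eM e0 by linarith
    then show ?thesis using Mpos by (simp add: divide_simps)
  qed
  have m199: "199 \<le> m" unfolding m_def using M200 by simp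
  define k where "k = nat \<lfloor>2 * \<epsilon> * m\<rfloor> + 1"
  define lo where "lo = nat \<lceil>m / 8\<rceil> + 1"
  define hi where "hi = nat \<lfloor>7 * m / 8\<rfloor> + 1"
  have k1: "2 * \<epsilon> * m < real k" "real k \<le> 2 * \<epsilon> * m + 1"
  proof -
    have nn: "0 \<le> \<lfloor>2 * \<epsilon> * m\<rfloor>" using epos m199 by simp
    have "real k = real_of_int \<lfloor>2 * \<epsilon> * m\<rfloor> + 1" unfolding k_def using nn by simp
    then show "2 * \<epsilon> * m < real k" "real k \<le> 2 * \<epsilon> * m + 1" by linarith+
  qed
  have lo1: "m / 8 + 1 \<le> real lo" "real lo \<le> m / 8 + 2"
  proof -
    have nn: "0 \<le> \<lceil>m / 8\<rceil>" using m199 by simp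
    have "real lo = real_of_int \<lceil>m / 8\<rceil> + 1" unfolding lo_def using nn by simp
    then show "m / 8 + 1 \<le> real lo" "real lo \<le> m / 8 + 2" by linarith+
  qed
  have hi1: "7 * m / 8 \<le> real hi" "real hi \<le> 7 * m / 8 + 1"
  proof -
    have nn: "0 \<le> \<lfloor>7 * m / 8\<rfloor>" using m199 by simp
    have "real hi = real_of_int \<lfloor>7 * m / 8\<rfloor> + 1" unfolding hi_def using nn by simp
    then show "7 * m / 8 \<le> real hi" "real hi \<le> 7 * m / 8 + 1" by linarith+
  qed
  have m0: "0 < m" using m199 by simp
  have h_lo: "1/8 \<le> (real lo - 1) / m" using lo1 m0 by (simp add: divide_simps)
  have h_hi: "(real hi - 1) / m \<le> 7/8" using hi1 m0 by (simp add: divide_simps)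
  have h_hiM: "hi \<le> M"
  proof -
    have "7 * m / 8 + 1 \<le> m + 1" using m0 by simp
    then have "real hi \<le> m + 1" using hi1 by linarith
    then have "real hi \<le> real M" unfolding m_def by simp
    then show ?thesis by simp
  qed
  have em: "\<epsilon> * m \<le> m / 200" using e0 m0 by (simp add: mult_right_mono)
  have h_lohi: "lo + 2 * k \<le> hi"
  proof -
    have "real lo + 2 * real k \<le> real hi" using lo1 k1 hi1 em m199 by linarith
    then show ?thesis by linarith
  qed
  have h_ke: "2 * \<epsilon> < real k / m" using k1 m0 by (simp add: divide_simps mult.commute)
  have P: "3/4 * fact M \<le> (\<Sum>\<sigma>\<in>{\<sigma>. \<sigma> permutes {1..M}}. acc M N pol out \<epsilon> u \<sigma>)" if u: "u \<in> {1..M}" for u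
  proof -
    have "3/4 \<le> measure_pmf.prob (cate_experiment M N pol out) (accurate_at M u \<epsilon>)" using acc[rule_format, OF u] d4 by linarith
    also have "\<dots> = (\<Sum>\<sigma>\<in>{\<sigma>. \<sigma> permutes {1..M}}. acc M N pol out \<epsilon> u \<sigma>) / fact M"
      by (rule prob_acc) (use M2 in simp)
    finally show ?thesis by (simp add: divide_simps)
  qed
  note core = part2_core[where M=M and lo=lo and hi=hi and k=k and \<epsilon>=\<epsilon> and t="1/10" and pol=pol and out=out and N=N, OF M2 h_lo[unfolded m_def] h_hi[unfolded m_def] h_hiM h_lohi h_ke[unfolded m_def] _ _ P]
  have core': "3/4 * real M \<le> real M - real (card {lo+k..hi-k}) + real (card {lo..hi-k}) * (1 + 1/10) / 2 + 2 * ((real k / m)\<^sup>2 / (1/10)) * real N"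
    using core epos unfolding m_def by simp
  have c1: "real (card {lo+k..hi-k}) = real hi - real lo - 2 * real k + 1" using h_lohi by (simp add: of_nat_diff)
  have c2: "real (card {lo..hi-k}) = real hi - real lo - real k + 1" using h_lohi by (simp add: of_nat_diff)
  define cc where "cc = (real k / m)\<^sup>2 / (1/10)"
  have A: "real M / 20 \<le> 2 * cc * real N"
  proof -
    have "3/4 * real M \<le> real M - (real hi - real lo - 2 * real k + 1) + (real hi - real lo - real k + 1) * (11/10) / 2 + 2 * cc * real N"
      using core' unfolding c1 c2 cc_def by simp
    moreover have "real M = m + 1" unfolding m_def by simp
    moreover have "real M - (real hi - real lo - 2 * real k + 1) + (real hi - real lo - real k + 1) * (11 / 10) / 2
       = real M - 9/20 * real hi + 9/20 * real lo + 29/20 * real k - 9/20" by (simp add: field_simps)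
    moreover have "real k \<le> m / 100 + 1" using k1(2) em by (simp add: mult.assoc)
    ultimately show ?thesis using lo1 hi1 m199 by linarith
  qed
  have km: "real k / m \<le> 4 * \<epsilon>"
  proof -
    have "1 / m \<le> 2 / real M"
    proof -
      have "real M \<le> 2 * m" unfolding m_def using M200 by simp
      then show ?thesis using m0 Mpos by (simp add: divide_simps)
    qed
    also have "2 / real M \<le> 2 * \<epsilon>" using eM by (simp add: divide_simps) 
    finally have "1 / m \<le> 2 * \<epsilon>" .
    moreover have "real k / m \<le> 2 * \<epsilon> + 1 / m"
    proof -
      have "real k / m \<le> (2 * \<epsilon> * m + 1) / m" using k1 m0 by (simp add: divide_right_mono)
      also have "\<dots> = 2 * \<epsilon> + 1 / m" using m0 by (simp add: field_simps)
      finally show ?thesis .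
    qed
    ultimately show ?thesis by linarith
  qed
  have "cc \<le> 160 * \<epsilon>\<^sup>2"
  proof -
    have "(real k / m)\<^sup>2 \<le> (4 * \<epsilon>)\<^sup>2" by (rule power_mono[OF km]) (use m0 in simp)
    then show ?thesis unfolding cc_def by (simp add: power_mult_distrib)
  qed
  then have "2 * cc * real N \<le> 320 * \<epsilon>\<^sup>2 * real N" by (simp add: mult_right_mono)
  with A have "real M / 20 \<le> 320 * \<epsilon>\<^sup>2 * real N" by linarith
  then show "1 / 6400 * real M / \<epsilon>\<^sup>2 \<le> real N" using epos by (simp add: divide_simps mult_ac)
qed

lemma part2:
  "\<exists>c>0. \<exists>\<epsilon>0>0. \<forall>M \<epsilon> \<delta> N pol (out :: hist \<Rightarrow> (nat \<Rightarrow> real) pmf).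
            2 \<le> M \<longrightarrow> 1 / real M \<le> \<epsilon> \<longrightarrow> \<epsilon> \<le> \<epsilon>0 \<longrightarrow> 0 < \<delta> \<longrightarrow> \<delta> \<le> 1/4 \<longrightarrow>
            (\<forall>u\<in>{1..M}. measure_pmf.prob (cate_experiment M N pol out) (accurate_at M u \<epsilon>) \<ge> 1 - \<delta>)
            \<longrightarrow> real N \<ge> c * real M / \<epsilon>^2"
  apply (rule exI[of _ "1/6400"])
  apply (intro conjI)
   apply simp
  apply (rule exI[of _ "1/200"])
  apply (intro conjI allI impI)
   apply simp
  apply (rule part2_main)
       apply assumption+
  done

lemma run_length: "h \<in> set_pmf (run pol \<tau> n) \<Longrightarrow> length h = n"
  by (induction n arbitrary: h) auto

definition rr :: "nat \<Rightarrow> hist \<Rightarrow> nat pmf" where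
  "rr M h = return_pmf (length h mod M + 1)"

lemma mgf_run:
  fixes \<phi> :: "nat \<times> bool \<Rightarrow> real"
  assumes nn: "\<And>x. 0 \<le> \<phi> x"
  shows "(\<integral>\<^sup>+h. ennreal (prod_list (map \<phi> h)) \<partial>run (rr M) \<tau> j)
       = (\<Prod>i<j. \<integral>\<^sup>+b. ennreal (\<phi> (i mod M + 1, b)) \<partial>bernoulli_pmf (\<tau> (i mod M + 1)))"
proof (induction j)
  case 0
  then show ?case by simp
next
  case (Suc j)
  define G where "G w = (\<integral>\<^sup>+b. ennreal (\<phi> (w, b)) \<partial>bernoulli_pmf (\<tau> w))" for w
  have pl: "prod_list (map \<phi> (h @ [x])) = prod_list (map \<phi> h) * \<phi> x" for h x by simp
  have pn: "0 \<le> prod_list (map \<phi> h)" for h by (induction h) (auto simp: nn)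
  have "(\<integral>\<^sup>+h. ennreal (prod_list (map \<phi> h)) \<partial>run (rr M) \<tau> (Suc j))
      = (\<integral>\<^sup>+h. ennreal (prod_list (map \<phi> h)) * G (length h mod M + 1) \<partial>run (rr M) \<tau> j)"
    by (simp add: rr_def G_def pl ennreal_mult'' pn nn nn_integral_cmult)
  also have "\<dots> = (\<integral>\<^sup>+h. ennreal (prod_list (map \<phi> h)) * G (j mod M + 1) \<partial>run (rr M) \<tau> j)"
    by (rule nn_integral_cong_AE) (auto simp: AE_measure_pmf_iff run_length)
  also have "\<dots> = (\<integral>\<^sup>+h. ennreal (prod_list (map \<phi> h)) \<partial>run (rr M) \<tau> j) * G (j mod M + 1)"
    by (rule nn_integral_multc) simp
  also have "\<dots> = (\<Prod>i<Suc j. G (i mod M + 1))"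
    using Suc.IH unfolding G_def by simp
  finally show ?case unfolding G_def .
qed

lemma prod_rr:
  fixes G :: "nat \<Rightarrow> 'a::comm_monoid_mult"
  assumes "0 < M"
  shows "(\<Prod>i<n * M. G (i mod M + 1)) = (\<Prod>w\<in>{1..M}. G w) ^ n"
proof (induction n)
  case 0
  then show ?case by simp
next
  case (Suc n)
  have split: "{..<Suc n * M} = {..<n * M} \<union> {n * M..<n * M + M}" by auto
  have "(\<Prod>i<Suc n * M. G (i mod M + 1)) = (\<Prod>i<n * M. G (i mod M + 1)) * (\<Prod>i\<in>{n * M..<n * M + M}. G (i mod M + 1))"
    unfolding split by (rule prod.union_disjoint) auto
  also have "(\<Prod>i\<in>{n * M..<n * M + M}. G (i mod M + 1)) = (\<Prod>i<M. G ((n * M + i) mod M + 1))"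
    by (rule prod.reindex_bij_witness[where i="\<lambda>i. n * M + i" and j="\<lambda>i. i - n * M"]) auto
  also have "\<dots> = (\<Prod>i<M. G (i + 1))" by (rule prod.cong) auto
  also have "\<dots> = (\<Prod>w\<in>{1..M}. G w)"
    by (rule prod.reindex_bij_witness[where i="\<lambda>w. w - 1" and j="\<lambda>i. i + 1"]) auto
  finally show ?case using Suc.IH by (simp add: mult.commute)
qed

definition Zc :: "nat \<Rightarrow> hist \<Rightarrow> nat" where
  "Zc w h = length (filter (\<lambda>x. x = (w, False)) h)"

lemma chernoff_real:
  fixes xu xv \<Delta> :: real
  assumes xu: "0 < xu" "xu \<le> 1" and xv: "0 \<le> xv" and D: "\<Delta> = xu - xv" "0 < \<Delta>"
  defines "lam \<equiv> \<Delta> / (4 * xu)"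
  shows "(1 - xu + xu * exp (- lam)) * (1 - xv + xv * exp lam) \<le> exp (- (\<Delta>\<^sup>2 / (8 * xu)))"
proof -
  have l0: "0 < lam" unfolding lam_def using xu D by simp
  have l1: "lam \<le> 1" unfolding lam_def using xu D xv by (simp add: divide_simps)
  have e1: "exp lam - 1 \<le> lam + lam\<^sup>2" using exp_bound[of lam] l0 l1 by simp
  have e2: "exp (- lam) \<le> 1 - lam + lam\<^sup>2"
  proof -
    have "1 + lam \<le> exp lam" by simp
    then have "exp (- lam) \<le> 1 / (1 + lam)" using l0 by (simp add: exp_minus divide_simps)
    also have "1 / (1 + lam) \<le> 1 - lam + lam\<^sup>2"
    proof -
      have "1 \<le> (1 - lam + lam\<^sup>2) * (1 + lam)" using l0 by (simp add: algebra_simps power2_eq_square power3_eq_cube)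
      then show ?thesis using l0 by (simp add: divide_simps)
    qed
    finally show ?thesis .
  qed
  have f1: "0 \<le> 1 - xu + xu * exp (- lam)" using xu by (simp add: add_nonneg_nonneg)
  have f2: "1 - xu + xu * exp (- lam) \<le> exp (- xu * (1 - exp (- lam)))"
    using exp_ge_add_one_self[of "- xu * (1 - exp (- lam))"] by (simp add: algebra_simps)
  have f3: "0 \<le> 1 - xv + xv * exp lam" using xv xu D by (smt (verit) exp_ge_zero mult_nonneg_nonneg one_le_exp_iff l0)
  have f4: "1 - xv + xv * exp lam \<le> exp (xv * (exp lam - 1))"
    using exp_ge_add_one_self[of "xv * (exp lam - 1)"] by (simp add: algebra_simps)
  have "(1 - xu + xu * exp (- lam)) * (1 - xv + xv * exp lam) \<le> exp (- xu * (1 - exp (- lam))) * exp (xv * (exp lam - 1))"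
    by (rule mult_mono[OF f2 f4]) (use f1 f3 in auto)
  also have "\<dots> = exp (xv * (exp lam - 1) - xu * (1 - exp (- lam)))" by (simp add: exp_add[symmetric])
  also have "\<dots> \<le> exp (- (\<Delta>\<^sup>2 / (8 * xu)))"
  proof -
    have a: "xv * (exp lam - 1) \<le> xv * (lam + lam\<^sup>2)" by (rule mult_left_mono[OF e1 xv])
    have b: "xu * (lam - lam\<^sup>2) \<le> xu * (1 - exp (- lam))" by (rule mult_left_mono) (use e2 xu in auto)
    have c: "xv * (lam + lam\<^sup>2) - xu * (lam - lam\<^sup>2) = - \<Delta> * lam + (xu + xv) * lam\<^sup>2" unfolding D(1) by (simp add: algebra_simps)
    have d: "(xu + xv) * lam\<^sup>2 \<le> 2 * xu * lam\<^sup>2" using D by (intro mult_right_mono) auto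
    have e: "- \<Delta> * lam + 2 * xu * lam\<^sup>2 = - (\<Delta>\<^sup>2 / (8 * xu))" unfolding lam_def using xu by (simp add: field_simps power2_eq_square)
    show ?thesis using a b c d e by simp
  qed
  finally show ?thesis .
qed

lemma pair_tail:
  fixes \<tau> :: "nat \<Rightarrow> real"
  assumes M: "0 < M" and u: "u \<in> {1..M}" and v: "v \<in> {1..M}" and uv: "u \<noteq> v"
    and rng: "\<And>w. 0 \<le> \<tau> w \<and> \<tau> w \<le> 1"
    and D: "0 < (1 - \<tau> u) - (1 - \<tau> v)"
  shows "measure_pmf.prob (run (rr M) \<tau> (n * M)) {h. Zc u h \<le> Zc v h}
      \<le> exp (- (real n * ((1 - \<tau> u) - (1 - \<tau> v))\<^sup>2 / (8 * (1 - \<tau> u))))"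
proof -
  define xu where "xu = 1 - \<tau> u"
  define xv where "xv = 1 - \<tau> v"
  define \<Delta> where "\<Delta> = xu - xv"
  define lam where "lam = \<Delta> / (4 * xu)"
  have xu: "0 < xu" "xu \<le> 1" using D rng[of u] rng[of v] unfolding xu_def by auto
  have xv: "0 \<le> xv" using rng[of v] unfolding xv_def by auto
  have D0: "0 < \<Delta>" using D unfolding \<Delta>_def xu_def xv_def .
  define \<phi> where "\<phi> x = exp (lam * (of_bool (x = (v, False)) - of_bool (x = (u, False))))" for x :: "nat \<times> bool"
  have \<phi>0: "0 \<le> \<phi> x" for x unfolding \<phi>_def by simp
  have prodZ: "prod_list (map \<phi> h) = exp (lam * (real (Zc v h) - real (Zc u h)))" for h
  proof (induction h)
    case Nil
    then show ?case by (simp add: Zc_def)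
  next
    case (Cons x h)
    then show ?case unfolding \<phi>_def Zc_def by (simp add: exp_add[symmetric] algebra_simps)
  qed
  have ind: "indicator {h. Zc u h \<le> Zc v h} h \<le> ennreal (prod_list (map \<phi> h))" for h
  proof (cases "Zc u h \<le> Zc v h")
    case True
    have "0 \<le> lam * (real (Zc v h) - real (Zc u h))" unfolding lam_def using True D0 xu by simp
    then have "1 \<le> prod_list (map \<phi> h)" unfolding prodZ by simp
    then show ?thesis using True by simp
  qed simp
  define G where "G w = (\<integral>\<^sup>+b. ennreal (\<phi> (w, b)) \<partial>bernoulli_pmf (\<tau> w))" for w
  have G1: "G w = 1" if "w \<noteq> u" "w \<noteq> v" for w
    unfolding G_def \<phi>_def using that rng[of w] by (simp add: ennreal_plus[symmetric] del: ennreal_plus)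
  have Gu: "G u = ennreal (1 - xu + xu * exp (- lam))"
    unfolding G_def \<phi>_def xu_def using uv rng[of u]
    by (simp add: ennreal_plus[symmetric] ennreal_mult''[symmetric] algebra_simps del: ennreal_plus)
  have Gv: "G v = ennreal (1 - xv + xv * exp lam)"
    unfolding G_def \<phi>_def xv_def using uv rng[of v]
    by (simp add: ennreal_plus[symmetric] ennreal_mult''[symmetric] algebra_simps del: ennreal_plus)
  have prodG: "(\<Prod>w\<in>{1..M}. G w) = G u * G v"
  proof -
    have "(\<Prod>w\<in>{1..M}. G w) = (\<Prod>w\<in>{u, v}. G w)"
      by (rule prod.mono_neutral_right) (use u v G1 in auto)
    then show ?thesis using uv by simp
  qed
  have "emeasure (run (rr M) \<tau> (n * M)) {h. Zc u h \<le> Zc v h} = (\<integral>\<^sup>+h. indicator {h. Zc u h \<le> Zc v h} h \<partial>run (rr M) \<tau> (n * M))"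
    by simp
  also have "\<dots> \<le> (\<integral>\<^sup>+h. ennreal (prod_list (map \<phi> h)) \<partial>run (rr M) \<tau> (n * M))"
    by (rule nn_integral_mono) (rule ind)
  also have "\<dots> = (\<Prod>i<n * M. G (i mod M + 1))"
    unfolding G_def by (rule mgf_run[OF \<phi>0])
  also have "\<dots> = (G u * G v) ^ n" using prod_rr[OF M, of G n] prodG by simp
  also have "\<dots> = ennreal (((1 - xu + xu * exp (- lam)) * (1 - xv + xv * exp lam)) ^ n)"
  proof -
    have "0 \<le> 1 - xu + xu * exp (- lam)" using xu by (simp add: add_nonneg_nonneg)
    moreover have "0 \<le> 1 - xv + xv * exp lam"
    proof -
      have "0 < lam" unfolding lam_def using D0 xu by simp
      then have "1 \<le> exp lam" by simp
      then have "xv \<le> xv * exp lam" using xv by (simp add: mult_le_cancel_left1)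
      then show ?thesis by simp
    qed
    ultimately show ?thesis unfolding Gu Gv by (simp add: ennreal_mult''[symmetric] ennreal_power)
  qed
  also have "\<dots> \<le> ennreal (exp (- (\<Delta>\<^sup>2 / (8 * xu))) ^ n)"
  proof (rule ennreal_leI, rule power_mono)
    show "(1 - xu + xu * exp (- lam)) * (1 - xv + xv * exp lam) \<le> exp (- (\<Delta>\<^sup>2 / (8 * xu)))"
      unfolding lam_def by (rule chernoff_real[OF xu xv \<Delta>_def D0])
    have "0 \<le> 1 - xu + xu * exp (- lam)" using xu by (simp add: add_nonneg_nonneg)
    moreover have "0 \<le> 1 - xv + xv * exp lam"
    proof -
      have "0 < lam" unfolding lam_def using D0 xu by simp
      then have "1 \<le> exp lam" by simp
      then have "xv \<le> xv * exp lam" using xv by (simp add: mult_le_cancel_left1)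
      then show ?thesis by simp
    qed
    ultimately show "0 \<le> (1 - xu + xu * exp (- lam)) * (1 - xv + xv * exp lam)" by simp
  qed
  also have "exp (- (\<Delta>\<^sup>2 / (8 * xu))) ^ n = exp (- (real n * \<Delta>\<^sup>2 / (8 * xu)))"
    by (simp add: exp_of_nat_mult[symmetric])
  finally have "ennreal (measure_pmf.prob (run (rr M) \<tau> (n * M)) {h. Zc u h \<le> Zc v h}) \<le> ennreal (exp (- (real n * \<Delta>\<^sup>2 / (8 * xu))))"
    by (simp add: measure_pmf.emeasure_eq_measure)
  then show ?thesis unfolding \<Delta>_def xu_def xv_def by (simp add: ennreal_le_iff)
qed

lemma perm_level_bij:
  assumes s: "\<sigma> permutes {1..M}"
  shows "bij_betw \<sigma> {v\<in>{1..M}. P (\<sigma> v)} {a\<in>{1..M}. P a}"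
proof (rule bij_betw_subset[OF permutes_imp_bij[OF s]])
  show "{v \<in> {1..M}. P (\<sigma> v)} \<subseteq> {1..M}" by auto
  show "\<sigma> ` {v \<in> {1..M}. P (\<sigma> v)} = {a \<in> {1..M}. P a}"
  proof
    show "\<sigma> ` {v \<in> {1..M}. P (\<sigma> v)} \<subseteq> {a \<in> {1..M}. P a}"
      using permutes_in_image[OF s] by auto
    show "{a \<in> {1..M}. P a} \<subseteq> \<sigma> ` {v \<in> {1..M}. P (\<sigma> v)}"
    proof
      fix a assume a: "a \<in> {a \<in> {1..M}. P a}"
      have "inv \<sigma> a \<in> {1..M}" using a permutes_in_image[OF permutes_inv[OF s]] by auto
      moreover have "\<sigma> (inv \<sigma> a) = a" using permutes_inverses(1)[OF s] by simp
      ultimately show "a \<in> \<sigma> ` {v \<in> {1..M}. P (\<sigma> v)}" using a by (metis (mono_tags, lifting) image_eqI mem_Collect_eq)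
    qed
  qed
qed

lemma perm_level_card:
  assumes s: "\<sigma> permutes {1..M}"
  shows "card {v\<in>{1..M}. P (\<sigma> v)} = card {a\<in>{1..M}. P a}"
  using bij_betw_same_card[OF perm_level_bij[OF s]] .

lemma tau_less_iff:
  assumes s: "\<sigma> permutes {1..M}" and M: "2 \<le> M" and u: "u \<in> {1..M}" and v: "v \<in> {1..M}"
  shows "(tau_unif M \<sigma> u < tau_unif M \<sigma> v) = (\<sigma> u < \<sigma> v)"
proof -
  have m: "0 < real M - 1" using M by simp
  show ?thesis using u v m unfolding tau_unif_def by (auto simp: divide_simps)
qed

lemma opt_alloc_eq:
  assumes s: "\<sigma> permutes {1..M}" and M: "2 \<le> M"
  shows "opt_alloc (tau_unif M \<sigma>) M K = {u\<in>{1..M}. M - K < \<sigma> u}"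
proof -
  have c: "card {v\<in>{1..M}. tau_unif M \<sigma> v > tau_unif M \<sigma> u} = M - \<sigma> u" if u: "u \<in> {1..M}" for u
  proof -
    have "{v\<in>{1..M}. tau_unif M \<sigma> v > tau_unif M \<sigma> u} = {v\<in>{1..M}. \<sigma> u < \<sigma> v}"
      using tau_less_iff[OF s M u] by auto
    then have "card {v\<in>{1..M}. tau_unif M \<sigma> v > tau_unif M \<sigma> u} = card {a\<in>{1..M}. \<sigma> u < a}"
      using perm_level_card[OF s, of "\<lambda>a. \<sigma> u < a"] by simp
    also have "{a\<in>{1..M}. \<sigma> u < a} = {\<sigma> u + 1..M}" by auto
    finally show ?thesis by simp
  qed
  show ?thesis unfolding opt_alloc_def
  proof (rule Collect_cong)
    fix u
    show "(u \<in> {1..M} \<and> card {v \<in> {1..M}. tau_unif M \<sigma> u < tau_unif M \<sigma> v} < K) = (u \<in> {1..M} \<and> M - K < \<sigma> u)"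
    proof (cases "u \<in> {1..M}")
      case True
      have "\<sigma> u \<le> M" "1 \<le> \<sigma> u" using permutes_in_image[OF s] True by auto
      then have "(M - \<sigma> u < K) = (M - K < \<sigma> u)" by presburger
      then show ?thesis using c[OF True] True by simp
    next
      case False
      then show ?thesis by blast
    qed
  qed
qed

lemma tau_unif_eq:
  assumes "w \<in> {1..M}"
  shows "tau_unif M \<sigma> w = (real (\<sigma> w) - 1) / (real M - 1)"
  using assms by (simp add: tau_unif_def)

lemma Vopt_lower:
  assumes s: "\<sigma> permutes {1..M}" and M2: "2 \<le> M" and KM: "K \<le> M"
  shows "real K / 2 \<le> alloc_value (tau_unif M \<sigma>) {u\<in>{1..M}. M - K < \<sigma> u}"
proof -
  define m where "m = real M - 1"
  have m0: "0 < m" using M2 unfolding m_def by simp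
  have "alloc_value (tau_unif M \<sigma>) {u\<in>{1..M}. M - K < \<sigma> u} = (\<Sum>u\<in>{u\<in>{1..M}. M - K < \<sigma> u}. (real (\<sigma> u) - 1) / m)"
    unfolding alloc_value_def m_def by (rule sum.cong) (auto simp: tau_unif_eq)
  also have "\<dots> = (\<Sum>a\<in>{a\<in>{1..M}. M - K < a}. (real a - 1) / m)"
    by (rule sum.reindex_bij_betw[OF perm_level_bij[OF s]])
  also have "{a\<in>{1..M}. M - K < a} = {M - K + 1..M}" using M2 by auto
  finally have e: "alloc_value (tau_unif M \<sigma>) {u\<in>{1..M}. M - K < \<sigma> u} = (\<Sum>a\<in>{M - K + 1..M}. (real a - 1)) / m"
    by (simp add: sum_divide_distrib)
  define X where "X = {M - K + 1..M}"
  define r where "r a = 2 * M - K + 1 - a" for a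
  have refl: "(\<Sum>a\<in>X. (real a - 1)) = (\<Sum>a\<in>X. (real (r a) - 1))"
    by (rule sum.reindex_bij_witness[where i=r and j=r]) (use KM in \<open>auto simp: X_def r_def of_nat_diff\<close>)
  have "2 * (\<Sum>a\<in>X. (real a - 1)) = (\<Sum>a\<in>X. (real a - 1) + (real (r a) - 1))"
  proof -
    have "(\<Sum>a\<in>X. (real a - 1) + (real (r a) - 1)) = (\<Sum>a\<in>X. (real a - 1)) + (\<Sum>a\<in>X. (real (r a) - 1))"
      by (rule sum.distrib)
    then show ?thesis using refl by simp
  qed
  also have "\<dots> = (\<Sum>a\<in>X. real (2 * M - K - 1))"
    by (rule sum.cong) (use KM M2 in \<open>auto simp: X_def r_def of_nat_diff\<close>)
  also have "\<dots> = real K * real (2 * M - K - 1)" using KM M2 unfolding X_def by (simp add: of_nat_diff)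
  also have "\<dots> \<ge> real K * m" unfolding m_def using KM M2 by (intro mult_left_mono) (auto simp: of_nat_diff)
  finally have "real K * m / 2 \<le> (\<Sum>a\<in>X. (real a - 1))" by simp
  then have "real K / 2 \<le> (\<Sum>a\<in>X. (real a - 1)) / m" using m0 by (simp add: divide_simps)
  then show ?thesis using e unfolding X_def by simp
qed

lemma comb:
  fixes Z :: "nat \<Rightarrow> nat" and \<epsilon> :: real
  assumes s: "\<sigma> permutes {1..M}" and M2: "2 \<le> M" and K1: "1 \<le> K" and KM: "K \<le> M" and e0: "0 < \<epsilon>"
    and S: "S \<subseteq> {1..M}" "card S = K"
    and sorted: "\<And>a b. a \<in> S \<Longrightarrow> b \<in> {1..M} - S \<Longrightarrow> Z a \<le> Z b"
    and nobad: "\<And>v u. v \<in> {1..M} \<Longrightarrow> u \<in> {1..M} \<Longrightarrow> M - K < \<sigma> v \<Longrightarrow> \<sigma> u \<le> M - K \<Longrightarrow>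
        \<epsilon> / 2 < (real (\<sigma> v) - real (\<sigma> u)) / (real M - 1) \<Longrightarrow>
        \<epsilon> * real K / 2 < (real M - 1) * ((real (\<sigma> v) - real (\<sigma> u)) / (real M - 1))\<^sup>2 \<Longrightarrow> Z v < Z u"
  shows "(\<sigma>, S) \<in> good_alloc M K \<epsilon>"
proof -
  define m where "m = real M - 1"
  have m0: "0 < m" using M2 unfolding m_def by simp
  define \<tau> where "\<tau> = tau_unif M \<sigma>"
  define opt where "opt = {u\<in>{1..M}. M - K < \<sigma> u}"
  have optM: "opt \<subseteq> {1..M}" unfolding opt_def by auto
  have finM: "finite {1..M}" by simp
  have fS: "finite S" using S(1) finite_subset by blast
  have fopt: "finite opt" using optM finite_subset by blast
  have card_opt: "card opt = K"
  proof -
    have "card opt = card {a\<in>{1..M}. M - K < a}" unfolding opt_def by (rule perm_level_card[OF s])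
    also have "{a\<in>{1..M}. M - K < a} = {M - K + 1..M}" using K1 by auto
    finally show ?thesis using KM by simp
  qed
  have tau_w: "\<tau> w = (real (\<sigma> w) - 1) / m" if "w \<in> {1..M}" for w
    unfolding \<tau>_def m_def using that by (rule tau_unif_eq)
  have sig_rng: "1 \<le> \<sigma> w \<and> \<sigma> w \<le> M" if "w \<in> {1..M}" for w using permutes_in_image[OF s] that by auto
  have Vopt: "real K / 2 \<le> alloc_value \<tau> opt" unfolding \<tau>_def opt_def by (rule Vopt_lower[OF s M2 KM])
  have Vpos: "0 < alloc_value \<tau> opt" using Vopt K1 by linarith
  define A where "A = S - opt"
  define B where "B = opt - S"
  have VS: "alloc_value \<tau> S = alloc_value \<tau> (S \<inter> opt) + (\<Sum>a\<in>A. \<tau> a)"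
    unfolding alloc_value_def A_def by (rule sum.Int_Diff[OF fS])
  have VO: "alloc_value \<tau> opt = alloc_value \<tau> (S \<inter> opt) + (\<Sum>a\<in>B. \<tau> a)"
    unfolding alloc_value_def B_def using sum.Int_Diff[OF fopt, of \<tau> S] by (simp add: Int_commute)
  have cA: "card S = card (S \<inter> opt) + card A"
    unfolding A_def using card_Int_Diff[OF fS, of opt] by simp
  have cB: "card opt = card (S \<inter> opt) + card B"
    unfolding B_def using card_Int_Diff[OF fopt, of S] by (simp add: Int_commute)
  have cAB: "card A = card B" using cA cB S(2) card_opt by simp
  have loss: "(\<Sum>a\<in>B. \<tau> a) - (\<Sum>a\<in>A. \<tau> a) \<le> \<epsilon> * real K / 2"
  proof (cases "A = {}")
    case True
    then have "card B = 0" using cAB by simp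
    then have "B = {}" using fopt unfolding B_def by simp
    then show ?thesis using True e0 by simp
  next
    case False
    have fA: "finite A" unfolding A_def using fS by simp
    have fB: "finite B" unfolding B_def using fopt by simp
    have "card A > 0" using False fA by (simp add: card_gt_0_iff)
    then have Bne: "B \<noteq> {}" using cAB by auto
    have "Min (\<sigma> ` A) \<in> \<sigma> ` A" using fA False by (intro Min_in) auto
    then obtain us where us1: "us \<in> A" "\<sigma> us = Min (\<sigma> ` A)" by auto
    have us: "us \<in> A" "\<And>a. a \<in> A \<Longrightarrow> \<sigma> us \<le> \<sigma> a"
      using us1 fA by auto
    have "Max (\<sigma> ` B) \<in> \<sigma> ` B" using fB Bne by (intro Max_in) auto
    then obtain vs where vs1: "vs \<in> B" "\<sigma> vs = Max (\<sigma> ` B)" by auto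
    have vs: "vs \<in> B" "\<And>b. b \<in> B \<Longrightarrow> \<sigma> b \<le> \<sigma> vs"
      using vs1 fB by auto
    have usS: "us \<in> S" "us \<in> {1..M}" "\<sigma> us \<le> M - K" using us(1) S(1) unfolding A_def opt_def by auto
    have vsO: "vs \<in> {1..M}" "vs \<notin> S" "M - K < \<sigma> vs" using vs(1) unfolding B_def opt_def by auto
    have Zle: "Z us \<le> Z vs" using sorted[OF usS(1)] vsO by auto
    define \<Delta> where "\<Delta> = (real (\<sigma> vs) - real (\<sigma> us)) / m"
    have nb: "\<not> (\<epsilon> / 2 < \<Delta> \<and> \<epsilon> * real K / 2 < m * \<Delta>\<^sup>2)"
      using nobad[OF vsO(1) usS(2) vsO(3) usS(3)] Zle unfolding \<Delta>_def m_def by auto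
    define r where "r = card A"
    have sB: "(\<Sum>a\<in>B. \<tau> a) \<le> real r * \<tau> vs"
    proof -
      have "(\<Sum>a\<in>B. \<tau> a) \<le> (\<Sum>a\<in>B. \<tau> vs)"
      proof (rule sum_mono)
        fix b assume b: "b \<in> B"
        then have "b \<in> {1..M}" unfolding B_def opt_def by auto
        then show "\<tau> b \<le> \<tau> vs" using tau_w vsO(1) vs(2)[OF b] m0 by (simp add: divide_right_mono)
      qed
      then show ?thesis unfolding r_def cAB by simp
    qed
    have sA: "real r * \<tau> us \<le> (\<Sum>a\<in>A. \<tau> a)"
    proof -
      have "(\<Sum>a\<in>A. \<tau> us) \<le> (\<Sum>a\<in>A. \<tau> a)"
      proof (rule sum_mono)
        fix a assume a: "a \<in> A"
        then have "a \<in> {1..M}" unfolding A_def using S(1) by auto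
        then show "\<tau> us \<le> \<tau> a" using tau_w usS(2) us(2)[OF a] m0 by (simp add: divide_right_mono)
      qed
      then show ?thesis unfolding r_def by simp
    qed
    have tD: "\<tau> vs - \<tau> us = \<Delta>" unfolding \<Delta>_def using tau_w[OF vsO(1)] tau_w[OF usS(2)] by (simp add: diff_divide_distrib)
    have D0: "0 < \<Delta>" unfolding \<Delta>_def using usS(3) vsO(3) m0 by (simp add: divide_pos_pos)
    have rK: "real r \<le> real K"
    proof -
      have "card B \<le> card opt" unfolding B_def using fopt by (simp add: card_mono)
      then show ?thesis unfolding r_def cAB card_opt by simp
    qed
    have rD: "real r \<le> m * \<Delta>"
    proof -
      have "\<sigma> ` A \<subseteq> {\<sigma> us..M - K}"
      proof
        fix y assume "y \<in> \<sigma> ` A"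
        then obtain a where a: "a \<in> A" "y = \<sigma> a" by auto
        then show "y \<in> {\<sigma> us..M - K}" using us(2)[OF a(1)] unfolding A_def opt_def using S(1) by auto
      qed
      then have "card (\<sigma> ` A) \<le> card {\<sigma> us..M - K}" by (intro card_mono) auto
      moreover have "card (\<sigma> ` A) = card A" using card_image[OF inj_on_subset[OF permutes_inj[OF s]]] by simp
      ultimately have "r \<le> M - K + 1 - \<sigma> us" unfolding r_def by simp
      then have "real r \<le> real (\<sigma> vs) - real (\<sigma> us)" using vsO(3) usS(3) by linarith
      then show ?thesis unfolding \<Delta>_def using m0 by simp
    qed
    have "(\<Sum>a\<in>B. \<tau> a) - (\<Sum>a\<in>A. \<tau> a) \<le> real r * \<Delta>" 
    proof -
      have "real r * \<Delta> = real r * \<tau> vs - real r * \<tau> us" using tD by (simp add: right_diff_distrib[symmetric])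
      then show ?thesis using sB sA by linarith
    qed
    also have "\<dots> \<le> \<epsilon> * real K / 2"
    proof (cases "\<Delta> \<le> \<epsilon> / 2")
      case True
      have "real r * \<Delta> \<le> real K * (\<epsilon> / 2)" by (rule mult_mono) (use rK True D0 in auto)
      then show ?thesis by (simp add: mult.commute)
    next
      case False
      then have "m * \<Delta>\<^sup>2 \<le> \<epsilon> * real K / 2" using nb by auto
      moreover have "real r * \<Delta> \<le> m * \<Delta> * \<Delta>" by (rule mult_right_mono) (use rD D0 in auto)
      ultimately show ?thesis by (simp add: power2_eq_square mult.assoc)
    qed
    finally show ?thesis .
  qed
  have "alloc_value \<tau> S \<ge> (1 - \<epsilon>) * alloc_value \<tau> opt"
  proof -
    have "\<epsilon> * real K / 2 \<le> \<epsilon> * alloc_value \<tau> opt" using Vopt e0 by simp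
    then show ?thesis using loss VS VO by (simp add: algebra_simps)
  qed
  then have ratio: "1 - \<epsilon> \<le> alloc_value \<tau> S / alloc_value \<tau> opt" using Vpos by (simp add: divide_simps)
  have "opt_alloc \<tau> M K = opt" unfolding \<tau>_def opt_def by (rule opt_alloc_eq[OF s M2])
  then show ?thesis unfolding good_alloc_def using S ratio unfolding \<tau>_def by simp
qed

definition Ssel :: "nat \<Rightarrow> nat \<Rightarrow> hist \<Rightarrow> nat set" where
  "Ssel M K h = set (take K (sort_key (\<lambda>w. Zc w h) [1..<M+1]))"

lemma Ssel_props:
  assumes KM: "K \<le> M"
  shows "Ssel M K h \<subseteq> {1..M}" "card (Ssel M K h) = K"
    "\<And>a b. a \<in> Ssel M K h \<Longrightarrow> b \<in> {1..M} - Ssel M K h \<Longrightarrow> Zc a h \<le> Zc b h"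
proof -
  define f where "f w = Zc w h" for w
  define xs where "xs = sort_key f [1..<M+1]"
  have sx: "set xs = {1..M}" unfolding xs_def by auto
  have dx: "distinct xs" unfolding xs_def by simp
  have lx: "length xs = M" unfolding xs_def by simp
  have so: "sorted (map f xs)" unfolding xs_def by (rule sorted_sort_key)
  have S_eq: "Ssel M K h = set (take K xs)" unfolding Ssel_def xs_def f_def by simp
  show "Ssel M K h \<subseteq> {1..M}" unfolding S_eq using set_take_subset[of K xs] sx by simp
  show "card (Ssel M K h) = K" unfolding S_eq using distinct_card[OF distinct_take[OF dx]] lx KM by simp
  fix a b assume a: "a \<in> Ssel M K h" and b: "b \<in> {1..M} - Ssel M K h"
  have bd: "b \<in> set (drop K xs)"
  proof -
    have "b \<in> set xs" using b sx by simp
    then have "b \<in> set (take K xs @ drop K xs)" by (simp only: append_take_drop_id)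
    then have "b \<in> set (take K xs) \<or> b \<in> set (drop K xs)" by (simp only: set_append Un_iff)
    moreover have "b \<notin> set (take K xs)" using b unfolding S_eq by blast
    ultimately show ?thesis by blast
  qed
  have sa: "sorted (map f (take K xs) @ map f (drop K xs))"
    using so by (metis append_take_drop_id map_append)
  have all: "\<forall>x\<in>set (map f (take K xs)). \<forall>y\<in>set (map f (drop K xs)). x \<le> y"
    using sa unfolding sorted_append by (elim conjE)
  have fa: "f a \<in> set (map f (take K xs))" using a unfolding S_eq by simp
  have fb: "f b \<in> set (map f (drop K xs))" using bd by simp
  have "f a \<le> f b" using all fa fb by blast
  then show "Zc a h \<le> Zc b h" unfolding f_def .
qed

lemma prob_cate_det:
  assumes "1 \<le> M"
  shows "measure_pmf.prob (cate_experiment M N pol (\<lambda>h. return_pmf (F h))) X =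
    (\<Sum>\<sigma>\<in>{\<sigma>. \<sigma> permutes {1..M}}. measure_pmf.prob (run pol (tau_unif M \<sigma>) N) {h. (\<sigma>, F h) \<in> X}) / fact M"
proof -
  let ?S = "{\<sigma>. \<sigma> permutes {1..M}}"
  let ?f = "\<lambda>\<sigma>. measure_pmf.prob (run pol (tau_unif M \<sigma>) N) {h. (\<sigma>, F h) \<in> X}"
  have fin: "finite ?S" by (rule finite_permutations) simp
  have ne: "?S \<noteq> {}" using permutes_id by blast
  have cS: "card ?S = fact M" using card_permutations[of "{1..M}" M] by simp
  have inner: "emeasure (bind_pmf (run pol (tau_unif M \<sigma>) N) (\<lambda>h. map_pmf (\<lambda>r. (\<sigma>, r)) (return_pmf (F h)))) X
     = ennreal (?f \<sigma>)" for \<sigma>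
  proof -
    have "bind_pmf (run pol (tau_unif M \<sigma>) N) (\<lambda>h. map_pmf (\<lambda>r. (\<sigma>, r)) (return_pmf (F h)))
        = map_pmf (\<lambda>h. (\<sigma>, F h)) (run pol (tau_unif M \<sigma>) N)"
      by (simp add: map_pmf_def bind_return_pmf)
    then show ?thesis by (simp add: measure_pmf.emeasure_eq_measure vimage_def)
  qed
  have "ennreal (measure_pmf.prob (cate_experiment M N pol (\<lambda>h. return_pmf (F h))) X)
      = emeasure (cate_experiment M N pol (\<lambda>h. return_pmf (F h))) X"
    by (simp add: measure_pmf.emeasure_eq_measure)
  also have "\<dots> = (\<integral>\<^sup>+\<sigma>. ennreal (?f \<sigma>) \<partial>pmf_of_set ?S)"
    unfolding cate_experiment_def emeasure_bind_pmf[of "pmf_of_set ?S"] by (simp only: inner)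
  also have "\<dots> = ennreal (\<integral>\<sigma>. ?f \<sigma> \<partial>pmf_of_set ?S)"
    by (rule pmf_bdd(2)[where C=1]) auto
  also have "(\<integral>\<sigma>. ?f \<sigma> \<partial>pmf_of_set ?S) = (\<Sum>\<sigma>\<in>?S. ?f \<sigma>) / fact M"
    using integral_pmf_of_set[OF ne fin] cS by simp
  finally show ?thesis
    by (subst (asm) ennreal_inj) (auto intro!: divide_nonneg_nonneg sum_nonneg)
qed

lemma per_sigma_good:
  fixes \<epsilon> \<delta> :: real
  assumes s: "\<sigma> permutes {1..M}" and M2: "2 \<le> M" and K1: "1 \<le> K" and KM: "K \<le> M"
    and e0: "0 < \<epsilon>" and d0: "0 < \<delta>" and d1: "\<delta> < 1"
    and n: "64 * ln (2 * real M / \<delta>) / \<epsilon> \<le> real n"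
  shows "1 - \<delta> \<le> measure_pmf.prob (run (rr M) (tau_unif M \<sigma>) (n * M)) {h. (\<sigma>, Ssel M K h) \<in> good_alloc M K \<epsilon>}"
proof -
  define m where "m = real M - 1"
  have m0: "0 < m" using M2 unfolding m_def by simp
  define \<tau> where "\<tau> = tau_unif M \<sigma>"
  define P where "P = run (rr M) \<tau> (n * M)"
  define Dl where "Dl v u = (real (\<sigma> v) - real (\<sigma> u)) / m" for v u
  define BP where "BP = {(v, u) \<in> {1..M} \<times> {1..M}. M - K < \<sigma> v \<and> \<sigma> u \<le> M - K \<and> \<epsilon> / 2 < Dl v u \<and> \<epsilon> * real K / 2 < m * (Dl v u)\<^sup>2}"
  define E where "E = (\<Union>p\<in>BP. {h. Zc (snd p) h \<le> Zc (fst p) h})"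
  define L where "L = ln (2 * real M / \<delta>)"
  have Mpos: "0 < real M" using M2 by simp
  have L0: "0 \<le> L" unfolding L_def using d0 d1 M2 by (simp add: divide_simps)
  have sig_rng: "1 \<le> \<sigma> w \<and> \<sigma> w \<le> M" if "w \<in> {1..M}" for w using permutes_in_image[OF s] that by auto
  have rng: "\<And>w. 0 \<le> \<tau> w \<and> \<tau> w \<le> 1" unfolding \<tau>_def by (rule tau_unif_rng[OF s])
  have pairb: "measure_pmf.prob P {h. Zc u h \<le> Zc v h} \<le> \<delta> / (real M)\<^sup>2" if vu: "(v, u) \<in> BP" for v u
  proof -
    have v: "v \<in> {1..M}" "M - K < \<sigma> v" and u: "u \<in> {1..M}" "\<sigma> u \<le> M - K"
      and b1: "\<epsilon> / 2 < Dl v u" and b2: "\<epsilon> * real K / 2 < m * (Dl v u)\<^sup>2" using vu unfolding BP_def by auto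
    have uv: "u \<noteq> v" using v u by auto
    define xu where "xu = 1 - \<tau> u"
    define xv where "xv = 1 - \<tau> v"
    have txu: "xu = (real M - real (\<sigma> u)) / m" unfolding xu_def \<tau>_def m_def using tau_unif_eq[OF u(1)] m0 unfolding m_def
      by (simp add: field_simps)
    have txv: "xv = (real M - real (\<sigma> v)) / m" unfolding xv_def \<tau>_def m_def using tau_unif_eq[OF v(1)] m0 unfolding m_def
      by (simp add: field_simps)
    have D: "xu - xv = Dl v u" unfolding txu txv Dl_def by (simp add: diff_divide_distrib[symmetric])
    have D0: "0 < Dl v u" using b1 e0 by linarith
    have xv0: "0 \<le> xv" unfolding txv using sig_rng[OF v(1)] m0 by simp
    have xvK: "xv \<le> real K / m"
    proof -
      have "real M - real (\<sigma> v) \<le> real K" using v(2) by linarith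
      then show ?thesis unfolding txv using m0 by (simp add: divide_right_mono)
    qed
    have xu0: "0 < xu" using D D0 xv0 by linarith
    have key: "\<epsilon> / 4 \<le> (Dl v u)\<^sup>2 / xu"
    proof (cases "real K / m \<le> Dl v u")
      case True
      then have "xu \<le> 2 * Dl v u" using D xvK by linarith
      then have "(Dl v u)\<^sup>2 / (2 * Dl v u) \<le> (Dl v u)\<^sup>2 / xu" using xu0 by (intro divide_left_mono) auto
      moreover have "(Dl v u)\<^sup>2 / (2 * Dl v u) = Dl v u / 2" using D0 by (simp add: power2_eq_square)
      ultimately show ?thesis using b1 by linarith
    next
      case False
      then have "xu \<le> 2 * (real K / m)" using D xvK by linarith
      then have "(Dl v u)\<^sup>2 / (2 * (real K / m)) \<le> (Dl v u)\<^sup>2 / xu" using xu0 m0 K1 by (intro divide_left_mono) auto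
      moreover have "(Dl v u)\<^sup>2 / (2 * (real K / m)) = m * (Dl v u)\<^sup>2 / (2 * real K)" using m0 K1 by (simp add: field_simps)
      moreover have "\<epsilon> / 4 \<le> m * (Dl v u)\<^sup>2 / (2 * real K)" using b2 K1 by (simp add: field_simps)
      ultimately show ?thesis by linarith
    qed
    have "measure_pmf.prob P {h. Zc u h \<le> Zc v h} \<le> exp (- (real n * (xu - xv)\<^sup>2 / (8 * xu)))"
      unfolding P_def xu_def xv_def
      by (rule pair_tail) (use M2 u(1) v(1) uv rng D D0 in \<open>auto simp: xu_def xv_def\<close>)
    also have "\<dots> \<le> exp (- (2 * L))"
    proof -
      have "real n * (\<epsilon> / 4) \<le> real n * ((Dl v u)\<^sup>2 / xu)" by (rule mult_left_mono[OF key]) simp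
      then have "real n * \<epsilon> / 4 \<le> real n * ((Dl v u)\<^sup>2 / xu)" by simp
      moreover have "64 * L \<le> real n * \<epsilon>" using n e0 unfolding L_def by (simp add: divide_simps)
      ultimately have "16 * L \<le> real n * ((Dl v u)\<^sup>2 / xu)" by linarith
      then have "16 * L / 8 \<le> real n * ((Dl v u)\<^sup>2 / xu) / 8" by (rule divide_right_mono) simp
      then have "2 * L \<le> real n * ((Dl v u)\<^sup>2 / xu) / 8" by simp
      moreover have "real n * ((Dl v u)\<^sup>2 / xu) / 8 = real n * (Dl v u)\<^sup>2 / (8 * xu)" by simp
      ultimately have "2 * L \<le> real n * (Dl v u)\<^sup>2 / (8 * xu)" by linarith
      then show ?thesis unfolding D by simp
    qed
    also have "exp (- (2 * L)) = (\<delta> / (2 * real M))\<^sup>2"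
    proof -
      have "exp (- (2 * L)) = (exp (- L))\<^sup>2" by (simp add: exp_of_nat_mult[symmetric] power2_eq_square exp_add[symmetric])
      also have "exp (- L) = \<delta> / (2 * real M)"
      proof -
        have pos: "0 < 2 * real M / \<delta>" using d0 Mpos by simp
        have "exp (- L) = inverse (exp L)" by (rule exp_minus)
        also have "exp L = 2 * real M / \<delta>" unfolding L_def using pos by (rule exp_ln)
        finally show ?thesis by simp
      qed
      finally show ?thesis .
    qed
    also have "\<dots> \<le> \<delta> / (real M)\<^sup>2" using d0 d1 Mpos by (simp add: power2_eq_square divide_simps)
    finally show ?thesis .
  qed
  have finBP: "finite BP" unfolding BP_def by (rule finite_subset[of _ "{1..M} \<times> {1..M}"]) auto
  have cardBP: "card BP \<le> M * M"
  proof -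
    have "card BP \<le> card ({1..M} \<times> {1..M})" unfolding BP_def by (rule card_mono) auto
    then show ?thesis by (simp add: card_cartesian_product)
  qed
  have PE: "measure_pmf.prob P E \<le> \<delta>"
  proof -
    have "measure_pmf.prob P E \<le> (\<Sum>p\<in>BP. measure_pmf.prob P {h. Zc (snd p) h \<le> Zc (fst p) h})"
      unfolding E_def by (rule measure_pmf.finite_measure_subadditive_finite[OF finBP]) auto
    also have "\<dots> \<le> (\<Sum>p\<in>BP. \<delta> / (real M)\<^sup>2)"
      by (rule sum_mono) (use pairb in auto)
    also have "\<dots> = real (card BP) * (\<delta> / (real M)\<^sup>2)" by simp
    also have "\<dots> \<le> real (M * M) * (\<delta> / (real M)\<^sup>2)" 
    proof (rule mult_right_mono)
      show "real (card BP) \<le> real (M * M)" using cardBP by (simp only: of_nat_le_iff)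
    qed (use d0 in simp)
    also have "\<dots> = \<delta>" using Mpos by (simp add: power2_eq_square)
    finally show ?thesis .
  qed
  have cover: "UNIV \<subseteq> {h. (\<sigma>, Ssel M K h) \<in> good_alloc M K \<epsilon>} \<union> E"
  proof
    fix h assume "h \<in> (UNIV :: hist set)"
    show "h \<in> {h. (\<sigma>, Ssel M K h) \<in> good_alloc M K \<epsilon>} \<union> E"
    proof (cases "h \<in> E")
      case False
      have "(\<sigma>, Ssel M K h) \<in> good_alloc M K \<epsilon>"
      proof (rule comb[OF s M2 K1 KM e0 Ssel_props(1,2)[OF KM]])
        show "\<And>a b. a \<in> Ssel M K h \<Longrightarrow> b \<in> {1..M} - Ssel M K h \<Longrightarrow> Zc a h \<le> Zc b h"
          by (rule Ssel_props(3)[OF KM])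
        fix v u assume "v \<in> {1..M}" "u \<in> {1..M}" "M - K < \<sigma> v" "\<sigma> u \<le> M - K"
          "\<epsilon> / 2 < (real (\<sigma> v) - real (\<sigma> u)) / (real M - 1)"
          "\<epsilon> * real K / 2 < (real M - 1) * ((real (\<sigma> v) - real (\<sigma> u)) / (real M - 1))\<^sup>2"
        then have "(v, u) \<in> BP" unfolding BP_def Dl_def m_def by auto
        then show "Zc v h < Zc u h" using False unfolding E_def by force
      qed
      then show ?thesis by simp
    qed simp
  qed
  have "1 = measure_pmf.prob P UNIV" by simp
  also have "\<dots> \<le> measure_pmf.prob P ({h. (\<sigma>, Ssel M K h) \<in> good_alloc M K \<epsilon>} \<union> E)"
    using cover by (metis top.extremum_uniqueI order_refl)
  also have "\<dots> \<le> measure_pmf.prob P {h. (\<sigma>, Ssel M K h) \<in> good_alloc M K \<epsilon>} + measure_pmf.prob P E"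
    by (rule measure_subadditive) (auto simp: measure_pmf.emeasure_eq_measure)
  finally show ?thesis using PE unfolding P_def \<tau>_def by linarith
qed

lemma part1_main:
  fixes M K :: nat and \<epsilon> \<delta> :: real
  assumes M2: "2 \<le> M" and K1: "1 \<le> K" and KM: "K \<le> M" and e0: "0 < \<epsilon>" and e1: "\<epsilon> < 1"
    and d0: "0 < \<delta>" and d1: "\<delta> < 1"
  shows "\<exists>N pol (out :: hist \<Rightarrow> nat set pmf).
               real N \<le> 65 * real M * ln (2 * real M / \<delta>) / \<epsilon> \<and>
               measure_pmf.prob (cate_experiment M N pol out) (good_alloc M K \<epsilon>) \<ge> 1 - \<delta>"
proof -
  define L where "L = ln (2 * real M / \<delta>)"
  define n where "n = nat \<lceil>64 * L / \<epsilon>\<rceil>"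
  have Mpos: "0 < real M" using M2 by simp
  have L1: "1 \<le> L"
  proof -
    have "exp (1::real) \<le> 1 + 1 + 1\<^sup>2" by (rule exp_bound) auto
    also have "\<dots> \<le> 2 * real M / \<delta>"
    proof -
      have "4 \<le> 2 * real M" using M2 by simp
      also have "2 * real M \<le> 2 * real M / \<delta>" using d0 d1 Mpos by (simp add: divide_simps)
      finally show ?thesis by simp
    qed
    finally show ?thesis unfolding L_def using d0 Mpos by (subst ln_ge_iff) auto
  qed
  have n1: "64 * L / \<epsilon> \<le> real n" unfolding n_def by linarith
  have n2: "real n \<le> 64 * L / \<epsilon> + 1"
  proof -
    have "0 \<le> 64 * L / \<epsilon>" using L1 e0 by simp
    then show ?thesis unfolding n_def by linarith
  qed
  have Le: "1 \<le> L / \<epsilon>" using L1 e0 e1 by (simp add: divide_simps)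
  have bound: "real (n * M) \<le> 65 * real M * L / \<epsilon>"
  proof -
    have "real n \<le> 65 * L / \<epsilon>" using n2 Le by simp
    then have "real n * real M \<le> 65 * L / \<epsilon> * real M" by (rule mult_right_mono) (use Mpos in simp)
    then show ?thesis by (simp add: field_simps)
  qed
  have prob: "1 - \<delta> \<le> measure_pmf.prob (cate_experiment M (n * M) (rr M) (\<lambda>h. return_pmf (Ssel M K h))) (good_alloc M K \<epsilon>)"
  proof -
    let ?S = "{\<sigma>. \<sigma> permutes {1..M}}"
    have "(\<Sum>\<sigma>\<in>?S. 1 - \<delta>) \<le> (\<Sum>\<sigma>\<in>?S. measure_pmf.prob (run (rr M) (tau_unif M \<sigma>) (n * M)) {h. (\<sigma>, Ssel M K h) \<in> good_alloc M K \<epsilon>})"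
      by (rule sum_mono) (rule per_sigma_good[OF _ M2 K1 KM e0 d0 d1 n1[unfolded L_def]], simp)
    moreover have "card ?S = fact M" using card_permutations[of "{1..M}" M] by simp
    ultimately have "fact M * (1 - \<delta>) \<le> (\<Sum>\<sigma>\<in>?S. measure_pmf.prob (run (rr M) (tau_unif M \<sigma>) (n * M)) {h. (\<sigma>, Ssel M K h) \<in> good_alloc M K \<epsilon>})"
      by simp
    then have "1 - \<delta> \<le> (\<Sum>\<sigma>\<in>?S. measure_pmf.prob (run (rr M) (tau_unif M \<sigma>) (n * M)) {h. (\<sigma>, Ssel M K h) \<in> good_alloc M K \<epsilon>}) / fact M"
      by (simp add: divide_simps mult.commute)
    also have "\<dots> = measure_pmf.prob (cate_experiment M (n * M) (rr M) (\<lambda>h. return_pmf (Ssel M K h))) (good_alloc M K \<epsilon>)"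
      by (rule prob_cate_det[symmetric]) (use M2 in simp)
    finally show ?thesis .
  qed
  show ?thesis using bound prob unfolding L_def by blast
qed

lemma part1:
  "\<exists>C>0. \<forall>M K \<epsilon> \<delta>. 2 \<le> M \<longrightarrow> 1 \<le> K \<longrightarrow> K \<le> M \<longrightarrow>
            0 < \<epsilon> \<longrightarrow> \<epsilon> < 1 \<longrightarrow> 0 < \<delta> \<longrightarrow> \<delta> < 1 \<longrightarrow>
            (\<exists>N pol (out :: hist \<Rightarrow> nat set pmf).
               real N \<le> C * real M * ln (2 * real M / \<delta>) / \<epsilon> \<and>
               measure_pmf.prob (cate_experiment M N pol out) (good_alloc M K \<epsilon>) \<ge> 1 - \<delta>)"
  apply (rule exI[of _ 65])
  apply (intro conjI allI impI)
   apply simp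
  apply (rule part1_main)
        apply assumption+
  done

theorem theorem2:
  shows "(\<exists>C>0. \<forall>M K \<epsilon> \<delta>. 2 \<le> M \<longrightarrow> 1 \<le> K \<longrightarrow> K \<le> M \<longrightarrow>
            0 < \<epsilon> \<longrightarrow> \<epsilon> < 1 \<longrightarrow> 0 < \<delta> \<longrightarrow> \<delta> < 1 \<longrightarrow>
            (\<exists>N pol (out :: hist \<Rightarrow> nat set pmf).
               real N \<le> C * real M * ln (2 * real M / \<delta>) / \<epsilon> \<and>
               measure_pmf.prob (cate_experiment M N pol out) (good_alloc M K \<epsilon>) \<ge> 1 - \<delta>))
       \<and>
         (\<exists>c>0. \<exists>\<epsilon>0>0. \<forall>M \<epsilon> \<delta> N pol (out :: hist \<Rightarrow> (nat \<Rightarrow> real) pmf).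
            2 \<le> M \<longrightarrow> 1 / real M \<le> \<epsilon> \<longrightarrow> \<epsilon> \<le> \<epsilon>0 \<longrightarrow> 0 < \<delta> \<longrightarrow> \<delta> \<le> 1/4 \<longrightarrow>
            (\<forall>u\<in>{1..M}. measure_pmf.prob (cate_experiment M N pol out) (accurate_at M u \<epsilon>) \<ge> 1 - \<delta>)
            \<longrightarrow> real N \<ge> c * real M / \<epsilon>^2)"
  by (rule conjI[OF part1 part2])

end
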